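(* Let $\alpha$ be irrational and $v$ holomorphic and bounded on $\mathbb{T}_h$ and real-valued on $\mathbb{T}$. Then: (1) for every $E\in\mathbb{C}\setminus\mathbb{R}$, $\omega^+(E,\mathrm{i}0)=\omega^-(E,\mathrm{i}0)=0$; (2) for every $|y|<h$, $\mathcal{Z}_{L,y}:=\{E\in\mathbb{C}: L(E,\mathrm{i}y)=0\}\subset\mathbb{R}$.
   Context: $\mathbb{T}=\mathbb{R}/2\pi\mathbb{Z}$, $\mathbb{T}_h=\{x+\mathrm{i}y:x\in\mathbb{T},|y|<h\}$; $\alpha$ irrational means $k\alpha\notin2\pi\mathbb{Z}$ for nonzero integers $k$. $S_{E,v}(z)=\begin{pmatrix}E-v(z)&-1\\1&0\end{pmatrix}$, $M_n(E,z)=S_{E,v}(z+n\alpha)\cdots S_{E,v}(z+\alpha)$, $L(E,\mathrm{i}y)=\lim_n\frac1{2\pi}\int_{\mathbb{T}}\frac1n\log\|M_n(E,x+\mathrm{i}y)\|\mathrm{d}x$, which is convex and piecewise linear in $y\in(-h,h)$; $\omega^{\pm}(E,\mathrm{i}y)=\lim_{\epsilon\to0^\pm}\frac1\epsilon(L(E,\mathrm{i}(y+\epsilon))-L(E,\mathrm{i}y))$ are its right/left derivatives in $y$. *)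

theory Defs
  imports "HOL-Analysis.Analysis"
begin

definition Smat :: "(complex \<Rightarrow> complex) \<Rightarrow> complex \<Rightarrow> complex \<Rightarrow> complex^2^2" where
  "Smat v E z = vector [vector [E - v z, -1], vector [1, 0]]"

fun Mn :: "(complex \<Rightarrow> complex) \<Rightarrow> real \<Rightarrow> nat \<Rightarrow> complex \<Rightarrow> complex \<Rightarrow> complex^2^2" where
  "Mn v \<alpha> 0 E z = mat 1"
| "Mn v \<alpha> (Suc n) E z = Smat v E (z + of_real (real (Suc n) * \<alpha>)) ** Mn v \<alpha> n E z"

definition mat_opnorm :: "complex^2^2 \<Rightarrow> real" where
  "mat_opnorm A = onorm (\<lambda>x. A *v x)"

text \<open>Complexified Lyapunov exponent L(E, i y).\<close>
definition Lyap :: "(complex \<Rightarrow> complex) \<Rightarrow> real \<Rightarrow> complex \<Rightarrow> real \<Rightarrow> real" where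
  "Lyap v \<alpha> E y = lim (\<lambda>n. (1 / (2 * pi)) *
      integral {0..2*pi} (\<lambda>x. (1 / real n) * ln (mat_opnorm (Mn v \<alpha> n E (Complex x y)))))"

text \<open>The strip T_h (as a subset of C; periodicity is imposed separately).\<close>
definition strip :: "real \<Rightarrow> complex set" where
  "strip h = {z. \<bar>Im z\<bar> < h}"

end

theory Submission
  imports Defs "HOL-Complex_Analysis.Complex_Analysis"
begin

section \<open>Basic 2x2 complex matrix facts\<close>

lemma norm_c2: "norm (x::complex^2) = sqrt ((cmod (x$1))^2 + (cmod (x$2))^2)"
  by (simp add: norm_vec_def L2_set_def sum_2)

lemma norm_c22: "norm (A::complex^2^2) =
   sqrt ((cmod (A$1$1))^2 + (cmod (A$1$2))^2 + (cmod (A$2$1))^2 + (cmod (A$2$2))^2)"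
  by (simp add: norm_vec_def L2_set_def sum_2 add.assoc)

lemma mv_1: "((A::complex^2^2) *v x)$1 = A$1$1*x$1 + A$1$2*x$2"
  by (simp add: matrix_vector_mult_def sum_2)
lemma mv_2: "((A::complex^2^2) *v x)$2 = A$2$1*x$1 + A$2$2*x$2"
  by (simp add: matrix_vector_mult_def sum_2)
lemma mm_entry: "((A::complex^2^2) ** B)$i$j = A$i$1*B$1$j + A$i$2*B$2$j"
  by (simp add: matrix_matrix_mult_def sum_2)

lemma cs2_real: "((a::real)*x + b*y)^2 \<le> (a^2+b^2)*(x^2+y^2)"
proof -
  have "(a^2+b^2)*(x^2+y^2) - (a*x+b*y)^2 = (a*y-b*x)^2" by (simp add: power2_eq_square algebra_simps)
  moreover have "0 \<le> (a*y-b*x)^2" by simp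
  ultimately show ?thesis by linarith
qed

lemma cmod_lin2: "(cmod (a*x + b*y))^2 \<le> ((cmod a)^2 + (cmod b)^2) * ((cmod x)^2 + (cmod y)^2)"
proof -
  have "cmod (a*x + b*y) \<le> cmod a * cmod x + cmod b * cmod y"
    by (metis norm_mult norm_triangle_ineq)
  hence "(cmod (a*x + b*y))^2 \<le> (cmod a * cmod x + cmod b * cmod y)^2"
    by (simp add: power_mono)
  also have "\<dots> \<le> ((cmod a)^2 + (cmod b)^2) * ((cmod x)^2 + (cmod y)^2)"
    by (rule cs2_real)
  finally show ?thesis .
qed

lemma norm_mv_sq: "(norm ((A::complex^2^2) *v x))^2 \<le> (norm A)^2 * (norm x)^2"
proof -
  have a: "(norm (A *v x))^2 = (cmod (A$1$1*x$1 + A$1$2*x$2))^2 + (cmod (A$2$1*x$1 + A$2$2*x$2))^2"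
    by (simp add: norm_c2 mv_1 mv_2)
  have b: "(norm A)^2 = (cmod (A$1$1))^2 + (cmod (A$1$2))^2 + (cmod (A$2$1))^2 + (cmod (A$2$2))^2"
    by (simp add: norm_c22)
  have c: "(norm x)^2 = (cmod (x$1))^2 + (cmod (x$2))^2" by (simp add: norm_c2)
  show ?thesis unfolding a b c
    using cmod_lin2[of "A$1$1" "x$1" "A$1$2" "x$2"] cmod_lin2[of "A$2$1" "x$1" "A$2$2" "x$2"]
    by (simp add: algebra_simps)
qed

lemma norm_mv: "norm ((A::complex^2^2) *v x) \<le> norm A * norm x"
proof -
  have "(norm (A *v x))^2 \<le> (norm A * norm x)^2" using norm_mv_sq by (simp add: power_mult_distrib)
  thus ?thesis by (rule power2_le_imp_le) simp
qed

lemma mv_scaleR: "(A::complex^2^2) *v (r *\<^sub>R x) = r *\<^sub>R (A *v x)"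
  by (simp add: vec_eq_iff matrix_vector_mult_def scaleR_sum_right)

lemma bl_mv: "bounded_linear (\<lambda>x. (A::complex^2^2) *v x)"
  by (rule bounded_linear_intro[where K="norm A"])
     (auto simp: matrix_vector_right_distrib mv_scaleR, metis mult.commute norm_mv)

lemma opnorm_le_norm: "mat_opnorm A \<le> norm A"
  unfolding mat_opnorm_def by (rule onorm_le) (simp add: norm_mv)

lemma opnorm_nonneg: "0 \<le> mat_opnorm A"
  unfolding mat_opnorm_def by (rule onorm_pos_le[OF bl_mv])

lemma opnorm_ge: "norm (A *v x) \<le> mat_opnorm A * norm x"
  unfolding mat_opnorm_def by (rule onorm[OF bl_mv])

lemma opnorm_mult: "mat_opnorm (A ** B) \<le> mat_opnorm A * mat_opnorm B"
proof -
  have "(\<lambda>x. (A ** B) *v x) = (\<lambda>x. A *v x) \<circ> (\<lambda>x. B *v x)"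
    by (simp add: fun_eq_iff matrix_vector_mul_assoc)
  thus ?thesis unfolding mat_opnorm_def using onorm_compose[OF bl_mv bl_mv] by simp
qed

lemma opnorm_lip: "\<bar>mat_opnorm A - mat_opnorm B\<bar> \<le> norm (A - B)"
proof -
  have "mat_opnorm A \<le> mat_opnorm B + norm (A - B)"
    unfolding mat_opnorm_def
  proof (rule onorm_le)
    fix x
    have "norm (A *v x) \<le> norm (B *v x) + norm ((A - B) *v x)"
      by (metis matrix_vector_mult_diff_rdistrib norm_triangle_sub)
    also have "\<dots> \<le> onorm ((*v) B) * norm x + norm (A - B) * norm x"
      using opnorm_ge[of B x] norm_mv[of "A - B" x] unfolding mat_opnorm_def by simp
    finally show "norm (A *v x) \<le> (onorm ((*v) B) + norm (A - B)) * norm x"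
      by (simp add: algebra_simps)
  qed
  moreover have "mat_opnorm B \<le> mat_opnorm A + norm (A - B)"
    unfolding mat_opnorm_def
  proof (rule onorm_le)
    fix x
    have "norm (B *v x) \<le> norm (A *v x) + norm ((B - A) *v x)"
      by (metis matrix_vector_mult_diff_rdistrib norm_triangle_sub)
    also have "\<dots> \<le> onorm ((*v) A) * norm x + norm (A - B) * norm x"
      using opnorm_ge[of A x] norm_mv[of "B - A" x] unfolding mat_opnorm_def by (simp add: norm_minus_commute)
    finally show "norm (B *v x) \<le> (onorm ((*v) A) + norm (A - B)) * norm x"
      by (simp add: algebra_simps)
  qed
  ultimately show ?thesis by linarith
qed

lemma norm_sq_columns: "(norm (A::complex^2^2))^2 =
   (norm (A *v vector [1,0]))^2 + (norm (A *v vector [0,1]))^2"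
  by (simp add: norm_c22 norm_c2 mv_1 mv_2)

lemma norm_vec10: "norm (vector [1,0] :: complex^2) = 1" by (simp add: norm_c2)
lemma norm_vec01: "norm (vector [0,1] :: complex^2) = 1" by (simp add: norm_c2)

lemma norm_le_sqrt2_opnorm: "norm A \<le> sqrt 2 * mat_opnorm A"
proof -
  have "(norm (A *v vector [1,0]))^2 \<le> (mat_opnorm A)^2"
    using opnorm_ge[of A "vector [1,0]"] by (simp add: norm_vec10 power_mono)
  moreover have "(norm (A *v vector [0,1]))^2 \<le> (mat_opnorm A)^2"
    using opnorm_ge[of A "vector [0,1]"] by (simp add: norm_vec01 power_mono)
  ultimately have "(norm A)^2 \<le> (sqrt 2 * mat_opnorm A)^2"
    by (simp add: norm_sq_columns power_mult_distrib)
  thus ?thesis by (rule power2_le_imp_le) (simp add: opnorm_nonneg)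
qed

lemma det_norm: "cmod (det (A::complex^2^2)) * 2 \<le> (norm A)^2"
proof -
  have "cmod (det A) \<le> cmod (A$1$1) * cmod (A$2$2) + cmod (A$1$2) * cmod (A$2$1)"
    using norm_triangle_ineq4[of "A$1$1*A$2$2" "A$1$2*A$2$1"] by (simp add: det_2 norm_mult)
  moreover have "2 * (cmod (A$1$1) * cmod (A$2$2)) \<le> (cmod (A$1$1))^2 + (cmod (A$2$2))^2"
    using zero_le_power2[of "cmod (A$1$1) - cmod (A$2$2)"] by (simp add: power2_eq_square algebra_simps)
  moreover have "2 * (cmod (A$1$2) * cmod (A$2$1)) \<le> (cmod (A$1$2))^2 + (cmod (A$2$1))^2"
    using zero_le_power2[of "cmod (A$1$2) - cmod (A$2$1)"] by (simp add: power2_eq_square algebra_simps)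
  ultimately show ?thesis by (simp add: norm_c22)
qed

lemma det1_opnorm_ge1: "det A = 1 \<Longrightarrow> 1 \<le> mat_opnorm A"
proof -
  assume "det A = 1"
  hence "2 \<le> (norm A)^2" using det_norm[of A] by simp
  also have "\<dots> \<le> (sqrt 2 * mat_opnorm A)^2"
    using norm_le_sqrt2_opnorm[of A] by (simp add: power_mono)
  finally have "1^2 \<le> (mat_opnorm A)^2" by (simp add: power_mult_distrib)
  thus ?thesis by (rule power2_le_imp_le) (simp add: opnorm_nonneg)
qed

lemma det1_norm_ge1: "det (A::complex^2^2) = 1 \<Longrightarrow> 1 \<le> norm A"
  apply (drule det1_opnorm_ge1) using opnorm_le_norm[of A] by linarith

section \<open>Transfer matrices\<close>

lemma Smat_entries:
  "Smat v E z $1$1 = E - v z" "Smat v E z $1$2 = -1" "Smat v E z $2$1 = 1" "Smat v E z $2$2 = 0"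
  by (simp_all add: Smat_def)

lemma det_Smat: "det (Smat v E z) = 1"
  by (simp add: det_2 Smat_entries)

lemma det_Mn: "det (Mn v \<alpha> n E z) = 1"
  by (induction n) (simp_all add: det_mul det_Smat)

lemma Mn_add: "Mn v \<alpha> (m + n) E z = Mn v \<alpha> m E (z + of_real (real n * \<alpha>)) ** Mn v \<alpha> n E z"
proof (induction m)
  case 0 then show ?case by simp
next
  case (Suc m)
  have e: "z + of_real (real (Suc (m + n)) * \<alpha>) = z + of_real (real n * \<alpha>) + of_real (real (Suc m) * \<alpha>)"
    by (simp add: algebra_simps)
  have "Mn v \<alpha> (Suc m + n) E z = Smat v E (z + of_real (real (Suc (m + n)) * \<alpha>)) ** Mn v \<alpha> (m + n) E z"
    by (simp only: add_Suc Mn.simps)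
  also have "\<dots> = Smat v E (z + of_real (real n * \<alpha>) + of_real (real (Suc m) * \<alpha>)) **
      (Mn v \<alpha> m E (z + of_real (real n * \<alpha>)) ** Mn v \<alpha> n E z)"
    by (simp only: e Suc)
  also have "\<dots> = Mn v \<alpha> (Suc m) E (z + of_real (real n * \<alpha>)) ** Mn v \<alpha> n E z"
    by (simp only: matrix_mul_assoc Mn.simps)
  finally show ?case .
qed

lemma Mn_Suc': "Mn v \<alpha> (Suc n) E z = Mn v \<alpha> n E (z + of_real \<alpha>) ** Smat v E (z + of_real \<alpha>)"
  using Mn_add[of v \<alpha> n 1 E z] by simp

lemma open_strip: "open (strip h)"
proof -
  have "strip h = {z. - h < Im z \<and> Im z < h}" by (auto simp: strip_def abs_less_iff)
  also have "open \<dots>" by (intro open_Collect_conj open_Collect_less continuous_intros)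
  finally show ?thesis .
qed

lemma strip_shift[simp]: "z + of_real r \<in> strip h \<longleftrightarrow> z \<in> strip h"
  by (simp add: strip_def)

lemma Complex_strip[simp]: "Complex x y \<in> strip h \<longleftrightarrow> \<bar>y\<bar> < h"
  by (simp add: strip_def)

lemma Complex_shift: "Complex x y + of_real c = Complex (x + c) y"
  by (simp add: complex_eq_iff)

lemma continuous_on_Complex_x: "continuous_on S (\<lambda>x. Complex x y)"
proof -
  have eq: "(\<lambda>x. Complex x y) = (\<lambda>x. of_real x + \<i> * of_real y)" by (auto simp: complex_eq_iff)
  show ?thesis unfolding eq by (intro continuous_intros)
qed

lemma continuous_on_opnorm: "continuous_on S mat_opnorm"
proof -
  have "1-lipschitz_on S mat_opnorm"
    by (rule lipschitz_onI) (auto simp: dist_norm opnorm_lip)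
  thus ?thesis by (rule lipschitz_on_continuous_on)
qed

section \<open>Periodic integrals\<close>

lemma periodic_nat:
  assumes "\<And>x. f (x + 2*pi) = f x"
  shows "f (x + 2*pi*real k) = f x"
proof (induction k arbitrary: x)
  case 0 then show ?case by simp
next
  case (Suc k)
  have "f (x + 2*pi*real (Suc k)) = f ((x + 2*pi*real k) + 2*pi)" by (simp add: algebra_simps)
  also have "\<dots> = f x" using assms Suc by simp
  finally show ?case .
qed

lemma periodic_int:
  assumes "\<And>x. f (x + 2*pi) = f x"
  shows "f (x + 2*pi*real_of_int k) = f x"
proof (cases "k \<ge> 0")
  case True
  then obtain n where "k = int n" by (metis nonneg_eq_int)
  thus ?thesis using periodic_nat[of f, OF assms] by simp
next
  case False
  define n where "n = nat (-k)"
  have n: "k = - int n" using False by (simp add: n_def)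
  have "f x = f ((x + 2*pi*real_of_int k) + 2*pi*real n)" by (simp add: n)
  also have "\<dots> = f (x + 2*pi*real_of_int k)" using periodic_nat[of f, OF assms] by simp
  finally show ?thesis by simp
qed

lemma periodic_integral_shift01:
  fixes f :: "real \<Rightarrow> 'a::banach"
  assumes cont: "continuous_on UNIV f" and per: "\<And>x. f (x + 2*pi) = f x"
    and c: "0 \<le> c" "c \<le> 2*pi"
  shows "integral {0..2*pi} (\<lambda>x. f (x + c)) = integral {0..2*pi} f"
proof -
  have int: "\<And>a b. f integrable_on {a..b}"
    by (rule integrable_continuous_interval, rule continuous_on_subset[OF cont]) simp
  have e1: "{c-c..2*pi+c-c} = {0..2*pi}" by simp
  have "integral {0..2*pi} (\<lambda>x. f (x + c)) = integral {c-c..2*pi+c-c} (\<lambda>x. f (x + c))"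
    by simp
  also have "\<dots> = integral {c..2*pi+c} f" by (rule integral_shift_real_ivl)
  also have "\<dots> = integral {c..2*pi} f + integral {2*pi..2*pi+c} f"
    using Henstock_Kurzweil_Integration.integral_combine[of c "2*pi" "2*pi+c" f] int c by simp
  also have "integral {2*pi..2*pi+c} f = integral {0..c} (\<lambda>x. f (x + 2*pi))"
    using integral_shift_real_ivl[of "2*pi" "2*pi" "2*pi+c" f] by simp
  also have "\<dots> = integral {0..c} f" using per by simp
  also have "integral {c..2*pi} f + integral {0..c} f = integral {0..c} f + integral {c..2*pi} f"
    by (rule add.commute)
  also have "\<dots> = integral {0..2*pi} f"
    using Henstock_Kurzweil_Integration.integral_combine[of 0 c "2*pi" f] int c by simp
  finally show ?thesis .
qed

lemma periodic_integral_shift: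
  fixes f :: "real \<Rightarrow> 'a::banach"
  assumes cont: "continuous_on UNIV f" and per: "\<And>x. f (x + 2*pi) = f x"
  shows "integral {0..2*pi} (\<lambda>x. f (x + c)) = integral {0..2*pi} f"
proof -
  define k where "k = floor (c / (2*pi))"
  define c' where "c' = c - 2*pi*real_of_int k"
  have "real_of_int k \<le> c/(2*pi)" "c/(2*pi) < real_of_int k + 1"
    unfolding k_def by linarith+
  hence c': "0 \<le> c'" "c' \<le> 2*pi" unfolding c'_def by (simp_all add: field_simps)
  have "f (x + c) = f (x + c')" for x
  proof -
    have "f (x + c) = f ((x + c') + 2*pi*real_of_int k)" by (rule arg_cong[where f=f]) (simp add: c'_def)
    also have "\<dots> = f (x + c')" by (rule periodic_int[of f, OF per])
    finally show ?thesis .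
  qed
  hence "integral {0..2*pi} (\<lambda>x. f (x + c)) = integral {0..2*pi} (\<lambda>x. f (x + c'))" by simp
  also have "\<dots> = integral {0..2*pi} f" using periodic_integral_shift01[OF cont per c'(1) c'(2)] .
  finally show ?thesis .
qed

lemma fekete:
  fixes a :: "nat \<Rightarrow> real"
  assumes sub: "\<And>m n. a (m + n) \<le> a m + a n" and nn: "\<And>n. 0 \<le> a n"
  shows "convergent (\<lambda>n. a n / real n)"
proof -
  define L where "L = Inf ((\<lambda>n. a n / real n) ` {1..})"
  have bdd: "bdd_below ((\<lambda>n. a n / real n) ` {1..})"
    by (rule bdd_belowI[of _ 0]) (auto simp: nn)
  have Lle: "L \<le> a n / real n" if "n \<ge> 1" for n
    unfolding L_def using bdd that by (auto intro: cInf_lower)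
  have "(\<lambda>n. a n / real n) \<longlonglongrightarrow> L"
  proof (rule LIMSEQ_I)
    fix r :: real assume r: "0 < r"
    have "\<exists>k\<in>{1..}. a k / real k < L + r/2"
    proof (rule ccontr)
      assume "\<not> ?thesis"
      hence "\<forall>k\<in>{1..}. L + r/2 \<le> a k / real k" by (auto simp: not_less)
      hence "L + r/2 \<le> L" unfolding L_def by (intro cInf_greatest) auto
      thus False using r by simp
    qed
    then obtain k where k: "k \<ge> 1" "a k / real k < L + r/2" by auto
    define M where "M = Max (a ` {..<k})"
    have aM: "a j \<le> M" if "j < k" for j unfolding M_def using that by auto
    have M0: "0 \<le> M" using aM[of 0] nn[of 0] k by simp
    have qr: "a (q*k + j) \<le> real q * a k + a j" for q j
    proof (induction q)
      case 0 then show ?case by simp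
    next
      case (Suc q)
      have "a (Suc q * k + j) = a (k + (q*k + j))" by (simp add: algebra_simps)
      also have "\<dots> \<le> a k + a (q*k+j)" by (rule sub)
      finally show ?case using Suc by (simp add: algebra_simps)
    qed
    obtain N :: nat where N: "N > 2 * M / r" using reals_Archimedean2 by blast
    show "\<exists>no. \<forall>n\<ge>no. norm (a n / real n - L) < r"
    proof (intro exI allI impI)
      fix n assume n: "n \<ge> max 1 N"
      hence n1: "n \<ge> 1" by simp
      have "L \<le> a n / real n" by (rule Lle[OF n1])
      moreover have "a n / real n < L + r"
      proof -
        define q where "q = n div k"
        define j where "j = n mod k"
        have nq: "n = q*k + j" by (simp add: q_def j_def)
        have jk: "j < k" using k by (simp add: j_def)
        have an: "a n \<le> real q * a k + M" using qr[of q j] aM[OF jk] nq by simp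
        have "real q * a k = (real q * real k) * (a k / real k)" using k by simp
        also have "\<dots> \<le> real n * (a k / real k)"
        proof (rule mult_right_mono)
          show "real q * real k \<le> real n" using nq by (metis le_add1 of_nat_le_iff of_nat_mult)
          show "0 \<le> a k / real k" using nn[of k] by simp
        qed
        finally have "a n \<le> real n * (a k / real k) + M" using an by linarith
        hence "a n / real n \<le> a k / real k + M / real n" using n1 by (simp add: field_simps)
        also have "M / real n < r/2"
        proof -
          have "real n \<ge> real N" using n by simp
          hence "real n > 2*M/r" using N by simp
          thus ?thesis using r n1 by (simp add: field_simps)
        qed
        finally show ?thesis using k by simp
      qed
      ultimately show "norm (a n / real n - L) < r" by simp
    qed
  qed
  thus ?thesis by (auto simp: convergent_def)
qed

locale lsetting =
  fixes v :: "complex \<Rightarrow> complex" and \<alpha> h :: real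
  assumes hpos: "0 < h"
    and hol: "v holomorphic_on strip h"
    and per: "\<And>z. z \<in> strip h \<Longrightarrow> v (z + of_real (2 * pi)) = v z"
    and bdd: "bounded (v ` strip h)"
    and realv: "\<And>x::real. v (of_real x) \<in> \<real>"
begin

lemma hol_shift: "(\<lambda>z. v (z + of_real c)) holomorphic_on strip h"
proof -
  have "(v \<circ> (\<lambda>z. z + of_real c)) holomorphic_on strip h"
    by (rule holomorphic_on_compose_gen) (auto intro!: holomorphic_intros hol)
  thus ?thesis by (simp add: o_def)
qed

lemma Smat_entry: "Smat v E w $ i $ k =
   (if i = 1 then (if k = 1 then E - v w else -1) else (if k = 1 then 1 else 0))"
  using exhaust_2[of i] exhaust_2[of k] by (auto simp: Smat_entries)

lemma Smat_hol: "(\<lambda>z. Smat v E (z + of_real c) $ i $ k) holomorphic_on strip h"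
  using exhaust_2[of i] exhaust_2[of k] hol_shift[of c] by (auto simp: Smat_entries intro!: holomorphic_intros)

lemma Mn_hol: "(\<lambda>z. Mn v \<alpha> n E z $ i $ j) holomorphic_on strip h"
proof (induction n arbitrary: i j)
  case 0 then show ?case by (simp add: mat_def)
next
  case (Suc n)
  show ?case unfolding Mn.simps mm_entry
    by (intro holomorphic_on_add holomorphic_on_mult Smat_hol Suc.IH)
qed

lemma Mn_cont: "continuous_on (strip h) (\<lambda>z. Mn v \<alpha> n E z)"
proof -
  have "continuous_on (strip h) (\<lambda>z. \<chi> i. \<chi> j. Mn v \<alpha> n E z $ i $ j)"
    by (intro continuous_on_vec_lambda holomorphic_on_imp_continuous_on Mn_hol)
  thus ?thesis by simp
qed

lemma Mn_per: "z \<in> strip h \<Longrightarrow> Mn v \<alpha> n E (z + of_real (2*pi)) = Mn v \<alpha> n E z"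
proof (induction n)
  case 0 then show ?case by simp
next
  case (Suc n)
  define c :: complex where "c = of_real (real (Suc n) * \<alpha>)"
  have e: "z + of_real (2*pi) + c = (z + c) + of_real (2*pi)" by (simp add: algebra_simps)
  have "z + c \<in> strip h" using Suc.prems unfolding c_def by (simp only: strip_shift)
  hence ev: "v (z + of_real (2*pi) + c) = v (z + c)" unfolding e by (rule per)
  have "Mn v \<alpha> (Suc n) E (z + of_real (2*pi)) = Smat v E (z + of_real (2*pi) + c) ** Mn v \<alpha> n E (z + of_real (2*pi))"
    by (simp only: Mn.simps c_def)
  also have "\<dots> = Smat v E (z + c) ** Mn v \<alpha> n E z" unfolding Smat_def ev Suc.IH[OF Suc.prems] ..
  also have "\<dots> = Mn v \<alpha> (Suc n) E z" by (simp only: Mn.simps c_def)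
  finally show ?case .
qed

end

context lsetting begin

definition lnM :: "nat \<Rightarrow> complex \<Rightarrow> complex \<Rightarrow> real" where
  "lnM n E z = ln (mat_opnorm (Mn v \<alpha> n E z))"

definition Aint :: "complex \<Rightarrow> real \<Rightarrow> nat \<Rightarrow> real" where
  "Aint E y n = integral {0..2*pi} (\<lambda>x. lnM n E (Complex x y))"

lemma opnorm_Mn_ge1: "1 \<le> mat_opnorm (Mn v \<alpha> n E z)"
  by (rule det1_opnorm_ge1[OF det_Mn])

lemma lnM_nonneg: "0 \<le> lnM n E z"
  unfolding lnM_def using opnorm_Mn_ge1 by simp

lemma lnM_cont: "\<bar>y\<bar> < h \<Longrightarrow> continuous_on UNIV (\<lambda>x. lnM n E (Complex x y))"
  unfolding lnM_def
proof (rule continuous_on_ln)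
  assume y: "\<bar>y\<bar> < h"
  have "continuous_on UNIV (\<lambda>x. Mn v \<alpha> n E (Complex x y))"
    by (rule continuous_on_compose2[OF Mn_cont continuous_on_Complex_x]) (auto simp: y)
  thus "continuous_on UNIV (\<lambda>x. mat_opnorm (Mn v \<alpha> n E (Complex x y)))"
    by (rule continuous_on_compose2[OF continuous_on_opnorm]) auto
  show "\<forall>x\<in>UNIV. mat_opnorm (Mn v \<alpha> n E (Complex x y)) \<noteq> 0"
    using opnorm_Mn_ge1 by (metis not_one_le_zero)
qed

lemma lnM_per: "\<bar>y\<bar> < h \<Longrightarrow> lnM n E (Complex (x + 2*pi) y) = lnM n E (Complex x y)"
  unfolding lnM_def using Mn_per[of "Complex x y" n E] by (simp add: Complex_shift[symmetric])

lemma lnM_int: "\<bar>y\<bar> < h \<Longrightarrow> (\<lambda>x. lnM n E (Complex x y)) integrable_on {a..b}"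
  by (rule integrable_continuous_interval, rule continuous_on_subset[OF lnM_cont]) auto

lemma Aint_nonneg: "\<bar>y\<bar> < h \<Longrightarrow> 0 \<le> Aint E y n"
  unfolding Aint_def by (rule integral_nonneg[OF lnM_int], assumption, rule lnM_nonneg)

lemma ln_le_prod: "0 < (a::real) \<Longrightarrow> 0 < b \<Longrightarrow> 0 < c \<Longrightarrow> a \<le> b * c \<Longrightarrow> ln a \<le> ln b + ln c"
proof -
  assume a: "0 < a" "0 < b" "0 < c" "a \<le> b * c"
  have "ln a \<le> ln (b * c)" using a by simp
  also have "\<dots> = ln b + ln c" using a by (simp add: ln_mult)
  finally show ?thesis .
qed

lemma lnM_add: "lnM (m + n) E z \<le> lnM m E (z + of_real (real n * \<alpha>)) + lnM n E z"
proof -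
  have "mat_opnorm (Mn v \<alpha> (m + n) E z) \<le> mat_opnorm (Mn v \<alpha> m E (z + of_real (real n * \<alpha>))) * mat_opnorm (Mn v \<alpha> n E z)"
    unfolding Mn_add by (rule opnorm_mult)
  moreover have "0 < mat_opnorm (Mn v \<alpha> (m + n) E z)" using opnorm_Mn_ge1[of "m+n" E z] by simp
  moreover have "0 < mat_opnorm (Mn v \<alpha> m E (z + of_real (real n * \<alpha>)))" using opnorm_Mn_ge1 by (metis less_le_trans zero_less_one)
  moreover have "0 < mat_opnorm (Mn v \<alpha> n E z)" using opnorm_Mn_ge1 by (metis less_le_trans zero_less_one)
  ultimately show ?thesis unfolding lnM_def by (intro ln_le_prod)
qed

lemma Aint_shift: "\<bar>y\<bar> < h \<Longrightarrow>
   integral {0..2*pi} (\<lambda>x. lnM m E (Complex x y + of_real c)) = Aint E y m"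
proof -
  assume y: "\<bar>y\<bar> < h"
  have "integral {0..2*pi} (\<lambda>x. lnM m E (Complex x y + of_real c)) =
        integral {0..2*pi} (\<lambda>x. (\<lambda>x. lnM m E (Complex x y)) (x + c))"
    by (simp add: Complex_shift)
  also have "\<dots> = Aint E y m" unfolding Aint_def
    by (rule periodic_integral_shift[OF lnM_cont[OF y] lnM_per[OF y]])
  finally show ?thesis .
qed

lemma lnM_shift_int: "\<bar>y\<bar> < h \<Longrightarrow> (\<lambda>x. lnM m E (Complex x y + of_real c)) integrable_on {0..2*pi}"
proof -
  assume y: "\<bar>y\<bar> < h"
  have "(\<lambda>x. lnM m E (Complex (x + c) y)) integrable_on {(0 + c) - c..(2*pi + c) - c}"
    by (rule integrable_shift_real_ivl[OF lnM_int[OF y]])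
  thus ?thesis by (simp add: Complex_shift)
qed

lemma Aint_sub: "\<bar>y\<bar> < h \<Longrightarrow> Aint E y (m + n) \<le> Aint E y m + Aint E y n"
proof -
  assume y: "\<bar>y\<bar> < h"
  have i2: "(\<lambda>x. lnM m E (Complex x y + of_real (real n * \<alpha>))) integrable_on {0..2*pi}"
    by (rule lnM_shift_int[OF y])
  have "Aint E y (m + n) \<le> integral {0..2*pi} (\<lambda>x. lnM m E (Complex x y + of_real (real n * \<alpha>)) + lnM n E (Complex x y))"
    unfolding Aint_def
    by (rule integral_le[OF lnM_int[OF y] integrable_add[OF i2 lnM_int[OF y]]]) (rule lnM_add)
  also have "\<dots> = Aint E y m + Aint E y n"
    unfolding integral_add[OF i2 lnM_int[OF y]] Aint_shift[OF y] Aint_def ..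
  finally show ?thesis .
qed

lemma Aint_conv: "\<bar>y\<bar> < h \<Longrightarrow> convergent (\<lambda>n. Aint E y n / real n)"
  by (rule fekete) (auto intro: Aint_sub Aint_nonneg)

lemma Lyap_eq: "\<bar>y\<bar> < h \<Longrightarrow> Lyap v \<alpha> E y = lim (\<lambda>n. Aint E y n / real n) / (2*pi)"
proof -
  assume y: "\<bar>y\<bar> < h"
  have eq: "(\<lambda>n. (1 / (2 * pi)) * integral {0..2*pi} (\<lambda>x. (1 / real n) * ln (mat_opnorm (Mn v \<alpha> n E (Complex x y)))))
      = (\<lambda>n. (1/(2*pi)) * (Aint E y n / real n))"
  proof
    fix n
    have "integral {0..2*pi} (\<lambda>x. (1 / real n) * ln (mat_opnorm (Mn v \<alpha> n E (Complex x y))))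
        = (1 / real n) * Aint E y n"
      unfolding Aint_def lnM_def by (rule integral_mult[symmetric]) (use lnM_int[OF y] in \<open>simp add: lnM_def\<close>)
    thus "(1 / (2 * pi)) * integral {0..2*pi} (\<lambda>x. (1 / real n) * ln (mat_opnorm (Mn v \<alpha> n E (Complex x y))))
      = (1/(2*pi)) * (Aint E y n / real n)" by simp
  qed
  have "(\<lambda>n. (1/(2*pi)) * (Aint E y n / real n)) \<longlonglongrightarrow> (1/(2*pi)) * lim (\<lambda>n. Aint E y n / real n)"
    by (intro tendsto_mult tendsto_const convergent_LIMSEQ_iff[THEN iffD1] Aint_conv[OF y])
  thus ?thesis unfolding Lyap_def eq by (simp add: limI)
qed

lemma Lyap_tendsto: "\<bar>y\<bar> < h \<Longrightarrow> (\<lambda>n. Aint E y n / real n) \<longlonglongrightarrow> 2*pi * Lyap v \<alpha> E y"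
  using Lyap_eq[of y E] Aint_conv[of y E] by (simp add: convergent_LIMSEQ_iff)

end

section \<open>Directional derivatives of holomorphic functions\<close>

lemma Complex_eq_ri: "Complex x t = of_real x + \<i> * of_real t"
  by (simp add: complex_eq_iff)

lemma dy_hol:
  assumes f: "f holomorphic_on strip h" and y: "\<bar>y\<bar> < h"
  shows "((\<lambda>t. f (Complex x t)) has_vector_derivative (\<i> * deriv f (Complex x y))) (at y)"
proof -
  have c: "((\<lambda>t. Complex x t) has_vector_derivative \<i>) (at y)"
    unfolding Complex_eq_ri by (auto intro!: derivative_eq_intros)
  have d: "(f has_field_derivative deriv f (Complex x y)) (at (Complex x y))"
    using holomorphic_derivI[OF f open_strip, of "Complex x y" UNIV] y by simp
  show ?thesis using field_vector_diff_chain_at[OF c d] by (simp add: o_def)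
qed

lemma dx_hol:
  assumes f: "f holomorphic_on strip h" and y: "\<bar>y\<bar> < h"
  shows "((\<lambda>t. f (Complex t y)) has_vector_derivative (deriv f (Complex x y))) (at x)"
proof -
  have c: "((\<lambda>t. Complex t y) has_vector_derivative 1) (at x)"
    unfolding Complex_eq_ri by (auto intro!: derivative_eq_intros)
  have d: "(f has_field_derivative deriv f (Complex x y)) (at (Complex x y))"
    using holomorphic_derivI[OF f open_strip, of "Complex x y" UNIV] y by simp
  show ?thesis using field_vector_diff_chain_at[OF c d] by (simp add: o_def)
qed

lemma dy_Re:
  assumes f: "f holomorphic_on strip h" and y: "\<bar>y\<bar> < h"
  shows "((\<lambda>t. Re (f (Complex x t))) has_real_derivative (- Im (deriv f (Complex x y)))) (at y)"
  unfolding has_real_derivative_iff_has_vector_derivative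
  using bounded_linear.has_vector_derivative[OF bounded_linear_Re dy_hol[OF f y, of x]] by simp

lemma dy_Im:
  assumes f: "f holomorphic_on strip h" and y: "\<bar>y\<bar> < h"
  shows "((\<lambda>t. Im (f (Complex x t))) has_real_derivative (Re (deriv f (Complex x y)))) (at y)"
  unfolding has_real_derivative_iff_has_vector_derivative
  using bounded_linear.has_vector_derivative[OF bounded_linear_Im dy_hol[OF f y, of x]] by simp

lemma dx_Re:
  assumes f: "f holomorphic_on strip h" and y: "\<bar>y\<bar> < h"
  shows "((\<lambda>t. Re (f (Complex t y))) has_real_derivative (Re (deriv f (Complex x y)))) (at x)"
  unfolding has_real_derivative_iff_has_vector_derivative
  using bounded_linear.has_vector_derivative[OF bounded_linear_Re dx_hol[OF f y, of x]] by simp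

lemma dx_Im:
  assumes f: "f holomorphic_on strip h" and y: "\<bar>y\<bar> < h"
  shows "((\<lambda>t. Im (f (Complex t y))) has_real_derivative (Im (deriv f (Complex x y)))) (at x)"
  unfolding has_real_derivative_iff_has_vector_derivative
  using bounded_linear.has_vector_derivative[OF bounded_linear_Im dx_hol[OF f y, of x]] by simp

lemma deriv_periodic:
  assumes f: "f holomorphic_on strip h" and per: "\<And>z. z \<in> strip h \<Longrightarrow> f (z + of_real (2*pi)) = f z"
    and z: "z \<in> strip h"
  shows "deriv f (z + of_real (2*pi)) = deriv f z"
proof -
  have zz: "z + of_real (2*pi) \<in> strip h" using z by (simp only: strip_shift)
  have d1: "(f has_field_derivative deriv f (z + of_real (2*pi))) (at (z + of_real (2*pi)))"
    using holomorphic_derivI[OF f open_strip zz, where T=UNIV] by simp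
  have d2: "((\<lambda>w. w + of_real (2*pi)) has_field_derivative 1) (at z)"
    by (auto intro!: derivative_eq_intros)
  have "((\<lambda>w. f (w + of_real (2*pi))) has_field_derivative deriv f (z + of_real (2*pi))) (at z)"
    using DERIV_chain[OF d1 d2] by (simp add: o_def)
  hence "(f has_field_derivative deriv f (z + of_real (2*pi))) (at z)"
  proof (rule has_field_derivative_transform_within_open[OF _ open_strip z])
    show "\<And>w. w \<in> strip h \<Longrightarrow> f (w + of_real (2*pi)) = f w" by (rule per)
  qed
  thus ?thesis by (rule DERIV_imp_deriv[symmetric])
qed


lemma DERIV_sumsq:
  "(a has_real_derivative a') (at y) \<Longrightarrow> (b has_real_derivative b') (at y) \<Longrightarrow>
   ((\<lambda>t. (a t)^2 + (b t)^2) has_real_derivative (2 * a y * a' + 2 * b y * b')) (at y)"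
  by (auto intro!: derivative_eq_intros)

lemma DERIV_prod_plus:
  "(a has_real_derivative a') (at y) \<Longrightarrow> (b has_real_derivative b') (at y) \<Longrightarrow>
   (c has_real_derivative c') (at y) \<Longrightarrow> (d has_real_derivative d') (at y) \<Longrightarrow>
   ((\<lambda>t. a t * b t + c t * d t) has_real_derivative (a' * b y + a y * b' + (c' * d y + c y * d'))) (at y)"
  by (auto intro!: derivative_eq_intros)

lemma DERIV_prod_minus:
  "(a has_real_derivative a') (at y) \<Longrightarrow> (b has_real_derivative b') (at y) \<Longrightarrow>
   (c has_real_derivative c') (at y) \<Longrightarrow> (d has_real_derivative d') (at y) \<Longrightarrow>
   ((\<lambda>t. a t * b t - c t * d t) has_real_derivative (a' * b y + a y * b' - (c' * d y + c y * d'))) (at y)"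
  by (auto intro!: derivative_eq_intros)

section \<open>Convexity of the mean of log of sums of squares\<close>

locale hfam =
  fixes g :: "'k \<Rightarrow> complex \<Rightarrow> complex" and K :: "'k set" and h :: real
  assumes finK: "finite K"
    and ghol: "\<And>k. k \<in> K \<Longrightarrow> g k holomorphic_on strip h"
    and gper: "\<And>k z. k \<in> K \<Longrightarrow> z \<in> strip h \<Longrightarrow> g k (z + of_real (2*pi)) = g k z"
    and Npos: "\<And>z. z \<in> strip h \<Longrightarrow> 0 < (\<Sum>k\<in>K. (Re (g k z))^2 + (Im (g k z))^2)"
begin

definition "g1 k = deriv (g k)"
definition "g2 k = deriv (g1 k)"

lemma g1hol: "k \<in> K \<Longrightarrow> g1 k holomorphic_on strip h"
  unfolding g1_def by (rule holomorphic_deriv[OF ghol open_strip])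

lemma g2hol: "k \<in> K \<Longrightarrow> g2 k holomorphic_on strip h"
  unfolding g2_def by (rule holomorphic_deriv[OF g1hol open_strip])

lemma g1per: "k \<in> K \<Longrightarrow> z \<in> strip h \<Longrightarrow> g1 k (z + of_real (2*pi)) = g1 k z"
  unfolding g1_def by (rule deriv_periodic[OF ghol gper])

definition "N z = (\<Sum>k\<in>K. (Re (g k z))^2 + (Im (g k z))^2)"
definition "ReP z = (\<Sum>k\<in>K. Re (g k z) * Re (g1 k z) + Im (g k z) * Im (g1 k z))"
definition "ImP z = (\<Sum>k\<in>K. Re (g k z) * Im (g1 k z) - Im (g k z) * Re (g1 k z))"
definition "R z = (\<Sum>k\<in>K. (Re (g1 k z))^2 + (Im (g1 k z))^2)"
definition "ReQ z = (\<Sum>k\<in>K. Re (g k z) * Re (g2 k z) + Im (g k z) * Im (g2 k z))"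
definition "sy z = -2 * ImP z / N z"
definition "sx z = 2 * ReP z / N z"
definition "syy z = (2 * R z - 2 * ReQ z) / N z - 4 * (ImP z)^2 / (N z)^2"
definition "sxx z = (2 * R z + 2 * ReQ z) / N z - 4 * (ReP z)^2 / (N z)^2"

lemma Npos': "\<bar>y\<bar> < h \<Longrightarrow> 0 < N (Complex x y)"
  unfolding N_def by (rule Npos) simp

lemma dN_y: assumes y: "\<bar>y\<bar> < h"
  shows "((\<lambda>t. N (Complex x t)) has_real_derivative (-2 * ImP (Complex x y))) (at y)"
proof -
  have "((\<lambda>t. \<Sum>k\<in>K. (Re (g k (Complex x t)))^2 + (Im (g k (Complex x t)))^2) has_real_derivative
        (\<Sum>k\<in>K. -2 * (Re (g k (Complex x y)) * Im (g1 k (Complex x y)) - Im (g k (Complex x y)) * Re (g1 k (Complex x y))))) (at y)"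
  proof (rule DERIV_sum)
    fix k assume k: "k \<in> K"
    show "((\<lambda>t. (Re (g k (Complex x t)))^2 + (Im (g k (Complex x t)))^2) has_real_derivative
        -2 * (Re (g k (Complex x y)) * Im (g1 k (Complex x y)) - Im (g k (Complex x y)) * Re (g1 k (Complex x y)))) (at y)"
      using DERIV_sumsq[OF dy_Re[OF ghol[OF k] y] dy_Im[OF ghol[OF k] y]]
      by (simp add: g1_def algebra_simps)
  qed
  thus ?thesis unfolding N_def ImP_def by (simp add: sum_distrib_left)
qed

lemma dImP_y: assumes y: "\<bar>y\<bar> < h"
  shows "((\<lambda>t. ImP (Complex x t)) has_real_derivative (ReQ (Complex x y) - R (Complex x y))) (at y)"
proof -
  have "((\<lambda>t. ImP (Complex x t)) has_real_derivative
        (\<Sum>k\<in>K. (Re (g k (Complex x y)) * Re (g2 k (Complex x y)) + Im (g k (Complex x y)) * Im (g2 k (Complex x y)))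
              - ((Re (g1 k (Complex x y)))^2 + (Im (g1 k (Complex x y)))^2))) (at y)"
    unfolding ImP_def
  proof (rule DERIV_sum)
    fix k assume k: "k \<in> K"
    show "((\<lambda>t. Re (g k (Complex x t)) * Im (g1 k (Complex x t)) - Im (g k (Complex x t)) * Re (g1 k (Complex x t)))
      has_real_derivative (Re (g k (Complex x y)) * Re (g2 k (Complex x y)) + Im (g k (Complex x y)) * Im (g2 k (Complex x y)))
              - ((Re (g1 k (Complex x y)))^2 + (Im (g1 k (Complex x y)))^2)) (at y)"
      using DERIV_prod_minus[OF dy_Re[OF ghol[OF k] y] dy_Im[OF g1hol[OF k] y] dy_Im[OF ghol[OF k] y] dy_Re[OF g1hol[OF k] y]]
      by (simp add: g1_def[symmetric] g2_def[symmetric] algebra_simps power2_eq_square)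
  qed
  thus ?thesis unfolding ReQ_def R_def by (simp add: sum_subtractf)
qed

lemma dN_x: assumes y: "\<bar>y\<bar> < h"
  shows "((\<lambda>t. N (Complex t y)) has_real_derivative (2 * ReP (Complex x y))) (at x)"
proof -
  have "((\<lambda>t. \<Sum>k\<in>K. (Re (g k (Complex t y)))^2 + (Im (g k (Complex t y)))^2) has_real_derivative
        (\<Sum>k\<in>K. 2 * (Re (g k (Complex x y)) * Re (g1 k (Complex x y)) + Im (g k (Complex x y)) * Im (g1 k (Complex x y))))) (at x)"
  proof (rule DERIV_sum)
    fix k assume k: "k \<in> K"
    show "((\<lambda>t. (Re (g k (Complex t y)))^2 + (Im (g k (Complex t y)))^2) has_real_derivative
        2 * (Re (g k (Complex x y)) * Re (g1 k (Complex x y)) + Im (g k (Complex x y)) * Im (g1 k (Complex x y)))) (at x)"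
      using DERIV_sumsq[OF dx_Re[OF ghol[OF k] y] dx_Im[OF ghol[OF k] y]]
      by (simp add: g1_def algebra_simps)
  qed
  thus ?thesis unfolding N_def ReP_def by (simp add: sum_distrib_left)
qed

lemma dReP_x: assumes y: "\<bar>y\<bar> < h"
  shows "((\<lambda>t. ReP (Complex t y)) has_real_derivative (R (Complex x y) + ReQ (Complex x y))) (at x)"
proof -
  have "((\<lambda>t. ReP (Complex t y)) has_real_derivative
        (\<Sum>k\<in>K. ((Re (g1 k (Complex x y)))^2 + (Im (g1 k (Complex x y)))^2) +
           (Re (g k (Complex x y)) * Re (g2 k (Complex x y)) + Im (g k (Complex x y)) * Im (g2 k (Complex x y))))) (at x)"
    unfolding ReP_def
  proof (rule DERIV_sum)
    fix k assume k: "k \<in> K"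
    show "((\<lambda>t. Re (g k (Complex t y)) * Re (g1 k (Complex t y)) + Im (g k (Complex t y)) * Im (g1 k (Complex t y)))
      has_real_derivative ((Re (g1 k (Complex x y)))^2 + (Im (g1 k (Complex x y)))^2) +
           (Re (g k (Complex x y)) * Re (g2 k (Complex x y)) + Im (g k (Complex x y)) * Im (g2 k (Complex x y)))) (at x)"
      using DERIV_prod_plus[OF dx_Re[OF ghol[OF k] y] dx_Re[OF g1hol[OF k] y] dx_Im[OF ghol[OF k] y] dx_Im[OF g1hol[OF k] y]]
      by (simp add: g1_def[symmetric] g2_def[symmetric] algebra_simps power2_eq_square)
  qed
  thus ?thesis unfolding ReQ_def R_def by (simp add: sum.distrib)
qed


lemma g2per: "k \<in> K \<Longrightarrow> z \<in> strip h \<Longrightarrow> g2 k (z + of_real (2*pi)) = g2 k z"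
  unfolding g2_def by (rule deriv_periodic[OF g1hol g1per])

lemma cont_g: "k \<in> K \<Longrightarrow> continuous_on (strip h) (g k)"
  by (rule holomorphic_on_imp_continuous_on[OF ghol])
lemma cont_g1: "k \<in> K \<Longrightarrow> continuous_on (strip h) (g1 k)"
  by (rule holomorphic_on_imp_continuous_on[OF g1hol])
lemma cont_g2: "k \<in> K \<Longrightarrow> continuous_on (strip h) (g2 k)"
  by (rule holomorphic_on_imp_continuous_on[OF g2hol])

lemma cont_N: "continuous_on (strip h) N"
  unfolding N_def by (intro continuous_intros cont_g)
lemma cont_ReP: "continuous_on (strip h) ReP"
  unfolding ReP_def by (intro continuous_intros cont_g cont_g1)
lemma cont_ImP: "continuous_on (strip h) ImP"
  unfolding ImP_def by (intro continuous_intros cont_g cont_g1)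
lemma cont_R: "continuous_on (strip h) R"
  unfolding R_def by (intro continuous_intros cont_g1)
lemma cont_ReQ: "continuous_on (strip h) ReQ"
  unfolding ReQ_def by (intro continuous_intros cont_g cont_g2)

lemma N_nz: "z \<in> strip h \<Longrightarrow> N z \<noteq> 0"
  using Npos[of z] unfolding N_def by simp

lemma cont_lnN: "continuous_on (strip h) (\<lambda>z. ln (N z))"
  by (intro continuous_on_ln cont_N) (auto simp: N_nz)
lemma cont_sy: "continuous_on (strip h) sy"
  unfolding sy_def by (intro continuous_intros cont_N cont_ImP) (auto simp: N_nz)
lemma cont_sx: "continuous_on (strip h) sx"
  unfolding sx_def by (intro continuous_intros cont_N cont_ReP) (auto simp: N_nz)
lemma cont_syy: "continuous_on (strip h) syy"
  unfolding syy_def by (intro continuous_intros cont_N cont_ImP cont_R cont_ReQ) (auto simp: N_nz)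
lemma cont_sxx: "continuous_on (strip h) sxx"
  unfolding sxx_def by (intro continuous_intros cont_N cont_ReP cont_R cont_ReQ) (auto simp: N_nz)

lemma d_lnN_y: assumes y: "\<bar>y\<bar> < h"
  shows "((\<lambda>t. ln (N (Complex x t))) has_real_derivative sy (Complex x y)) (at y)"
proof (rule DERIV_cong)
  show "((\<lambda>t. ln (N (Complex x t))) has_real_derivative (inverse (N (Complex x y)) * (-2 * ImP (Complex x y)))) (at y)"
    by (rule DERIV_chain2[OF DERIV_ln[OF Npos'[OF y]] dN_y[OF y]])
  show "inverse (N (Complex x y)) * (-2 * ImP (Complex x y)) = sy (Complex x y)"
    by (simp add: sy_def divide_inverse mult.commute)
qed

lemma d_sy_y: assumes y: "\<bar>y\<bar> < h"
  shows "((\<lambda>t. sy (Complex x t)) has_real_derivative syy (Complex x y)) (at y)"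
proof -
  have nz: "N (Complex x y) \<noteq> 0" using Npos'[OF y, of x] by simp
  have "((\<lambda>t. (-2 * ImP (Complex x t)) / N (Complex x t)) has_real_derivative
     ((-2 * (ReQ (Complex x y) - R (Complex x y))) * N (Complex x y) - (-2 * ImP (Complex x y)) * (-2 * ImP (Complex x y)))
       / (N (Complex x y) * N (Complex x y))) (at y)"
    by (rule DERIV_divide[OF DERIV_cmult[OF dImP_y[OF y]] dN_y[OF y] nz])
  moreover have "((-2 * (ReQ (Complex x y) - R (Complex x y))) * N (Complex x y) - (-2 * ImP (Complex x y)) * (-2 * ImP (Complex x y)))
       / (N (Complex x y) * N (Complex x y)) = syy (Complex x y)"
    using nz unfolding syy_def by (simp add: field_simps power2_eq_square)
  ultimately show ?thesis unfolding sy_def by simp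
qed

lemma d_sx_x: assumes y: "\<bar>y\<bar> < h"
  shows "((\<lambda>t. sx (Complex t y)) has_real_derivative sxx (Complex x y)) (at x)"
proof -
  have nz: "N (Complex x y) \<noteq> 0" using Npos'[OF y, of x] by simp
  have "((\<lambda>t. (2 * ReP (Complex t y)) / N (Complex t y)) has_real_derivative
     ((2 * (R (Complex x y) + ReQ (Complex x y))) * N (Complex x y) - (2 * ReP (Complex x y)) * (2 * ReP (Complex x y)))
       / (N (Complex x y) * N (Complex x y))) (at x)"
    by (rule DERIV_divide[OF DERIV_cmult[OF dReP_x[OF y]] dN_x[OF y] nz])
  moreover have "((2 * (R (Complex x y) + ReQ (Complex x y))) * N (Complex x y) - (2 * ReP (Complex x y)) * (2 * ReP (Complex x y)))
       / (N (Complex x y) * N (Complex x y)) = sxx (Complex x y)"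
    using nz unfolding sxx_def by (simp add: field_simps power2_eq_square)
  ultimately show ?thesis unfolding sx_def by simp
qed

lemma CS_P: "(ReP z)^2 + (ImP z)^2 \<le> N z * R z"
proof -
  define P where "P = (\<Sum>k\<in>K. cnj (g k z) * g1 k z)"
  have reP: "Re P = ReP z" unfolding P_def ReP_def by (simp add: Re_sum)
  have imP: "Im P = ImP z" unfolding P_def ImP_def by (simp add: Im_sum)
  have "cmod P \<le> (\<Sum>k\<in>K. cmod (g k z) * cmod (g1 k z))"
    unfolding P_def by (rule order_trans[OF norm_sum]) (simp add: norm_mult)
  hence "(cmod P)^2 \<le> (\<Sum>k\<in>K. cmod (g k z) * cmod (g1 k z))^2"
    by (simp add: power_mono)
  also have "\<dots> \<le> (\<Sum>k\<in>K. (cmod (g k z))^2) * (\<Sum>k\<in>K. (cmod (g1 k z))^2)"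
    by (rule Cauchy_Schwarz_ineq_sum)
  also have "\<dots> = N z * R z" unfolding N_def R_def by (simp add: cmod_power2)
  finally show ?thesis using reP imP by (simp add: cmod_power2)
qed

lemma syy_eq: "z \<in> strip h \<Longrightarrow> syy z = (4 * (N z * R z - ((ReP z)^2 + (ImP z)^2)) / (N z)^2) - sxx z"
  using N_nz[of z] unfolding syy_def sxx_def by (simp add: field_simps power2_eq_square)

lemma Delta_nonneg: "0 \<le> 4 * (N z * R z - ((ReP z)^2 + (ImP z)^2)) / (N z)^2"
  using CS_P[of z] by simp

lemma cont_pair: "continuous_on S (\<lambda>p::real\<times>real. Complex (snd p) (fst p))"
  unfolding Complex_eq_ri by (intro continuous_intros)

lemma cont_comp2:
  assumes "continuous_on (strip h) F"
  shows "continuous_on ({-h<..<h} \<times> {0..2*pi}) (\<lambda>(y, x). F (Complex x y))"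
proof -
  have "continuous_on ({-h<..<h} \<times> {0..2*pi}) (\<lambda>p. F (Complex (snd p) (fst p)))"
    by (rule continuous_on_compose2[OF assms cont_pair]) (auto simp: abs_less_iff)
  thus ?thesis by (simp add: case_prod_beta)
qed

lemma cont_line: "continuous_on (strip h) F \<Longrightarrow> \<bar>y\<bar> < h \<Longrightarrow> continuous_on S (\<lambda>x. F (Complex x y))"
  by (rule continuous_on_compose2[OF _ continuous_on_Complex_x]) auto

lemma int_line: fixes F :: "complex \<Rightarrow> real" assumes "continuous_on (strip h) F" "\<bar>y\<bar> < h"
  shows "(\<lambda>x. F (Complex x y)) integrable_on {a..b}"
  by (rule integrable_continuous_interval[OF cont_line[OF assms]])

definition "psi y = integral {0..2*pi} (\<lambda>x. ln (N (Complex x y)))"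
definition "phi y = integral {0..2*pi} (\<lambda>x. sy (Complex x y))"
definition "chi y = integral {0..2*pi} (\<lambda>x. syy (Complex x y))"

lemma psi_deriv: assumes y: "\<bar>y\<bar> < h" shows "(psi has_real_derivative phi y) (at y)"
proof -
  have yU: "y \<in> {-h<..<h}" using y by (simp add: abs_less_iff)
  have "((\<lambda>y. integral (cbox 0 (2*pi)) (\<lambda>x. ln (N (Complex x y)))) has_field_derivative
        integral (cbox 0 (2*pi)) (\<lambda>x. sy (Complex x y))) (at y within {-h<..<h})"
  proof (rule leibniz_rule_field_derivative[where fx="\<lambda>y x. sy (Complex x y)"])
    fix y' x assume "y' \<in> {-h<..<h}" "x \<in> cbox 0 (2*pi)"
    hence y': "\<bar>y'\<bar> < h" by (simp add: abs_less_iff)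
    show "((\<lambda>y. ln (N (Complex x y))) has_field_derivative sy (Complex x y')) (at y' within {-h<..<h})"
      by (rule has_field_derivative_at_within[OF d_lnN_y[OF y']])
  next
    fix y' assume "y' \<in> {-h<..<h}"
    hence y': "\<bar>y'\<bar> < h" by (simp add: abs_less_iff)
    show "(\<lambda>x. ln (N (Complex x y'))) integrable_on cbox 0 (2*pi)"
      using int_line[OF cont_lnN y'] by simp
  next
    show "continuous_on ({-h<..<h} \<times> cbox 0 (2*pi)) (\<lambda>(y, x). sy (Complex x y))"
      using cont_comp2[OF cont_sy] by simp
  qed (use yU in auto)
  thus ?thesis unfolding psi_def phi_def using at_within_open[OF yU] by simp
qed

lemma phi_deriv: assumes y: "\<bar>y\<bar> < h" shows "(phi has_real_derivative chi y) (at y)"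
proof -
  have yU: "y \<in> {-h<..<h}" using y by (simp add: abs_less_iff)
  have "((\<lambda>y. integral (cbox 0 (2*pi)) (\<lambda>x. sy (Complex x y))) has_field_derivative
        integral (cbox 0 (2*pi)) (\<lambda>x. syy (Complex x y))) (at y within {-h<..<h})"
  proof (rule leibniz_rule_field_derivative[where fx="\<lambda>y x. syy (Complex x y)"])
    fix y' x assume "y' \<in> {-h<..<h}" "x \<in> cbox 0 (2*pi)"
    hence y': "\<bar>y'\<bar> < h" by (simp add: abs_less_iff)
    show "((\<lambda>y. sy (Complex x y)) has_field_derivative syy (Complex x y')) (at y' within {-h<..<h})"
      by (rule has_field_derivative_at_within[OF d_sy_y[OF y']])
  next
    fix y' assume "y' \<in> {-h<..<h}"
    hence y': "\<bar>y'\<bar> < h" by (simp add: abs_less_iff)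
    show "(\<lambda>x. sy (Complex x y')) integrable_on cbox 0 (2*pi)"
      using int_line[OF cont_sy y'] by simp
  next
    show "continuous_on ({-h<..<h} \<times> cbox 0 (2*pi)) (\<lambda>(y, x). syy (Complex x y))"
      using cont_comp2[OF cont_syy] by simp
  qed (use yU in auto)
  thus ?thesis unfolding chi_def phi_def using at_within_open[OF yU] by simp
qed

lemma ReP_per: "z \<in> strip h \<Longrightarrow> ReP (z + of_real (2*pi)) = ReP z"
  unfolding ReP_def by (intro sum.cong refl) (simp only: gper g1per)
lemma N_per: "z \<in> strip h \<Longrightarrow> N (z + of_real (2*pi)) = N z"
  unfolding N_def by (intro sum.cong refl) (simp only: gper)
lemma sx_per: "z \<in> strip h \<Longrightarrow> sx (z + of_real (2*pi)) = sx z"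
  unfolding sx_def by (simp only: ReP_per N_per)

lemma int_sxx: assumes y: "\<bar>y\<bar> < h" shows "integral {0..2*pi} (\<lambda>x. sxx (Complex x y)) = 0"
proof -
  have "((\<lambda>x. sxx (Complex x y)) has_integral (sx (Complex (2*pi) y) - sx (Complex 0 y))) {0..2*pi}"
  proof (rule fundamental_theorem_of_calculus)
    fix x assume "x \<in> {0..2*pi}"
    show "((\<lambda>t. sx (Complex t y)) has_vector_derivative sxx (Complex x y)) (at x within {0..2*pi})"
      using d_sx_x[OF y, of x] unfolding has_real_derivative_iff_has_vector_derivative
      by (rule has_vector_derivative_at_within)
  qed simp
  moreover have "sx (Complex (2*pi) y) = sx (Complex 0 y)"
  proof -
    have e: "Complex (2*pi) y = Complex 0 y + of_real (2*pi)" by (simp add: complex_eq_iff)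
    have "sx (Complex (2*pi) y) = sx (Complex 0 y + of_real (2*pi))" by (simp only: e)
    also have "\<dots> = sx (Complex 0 y)" by (rule sx_per) (simp add: y)
    finally show ?thesis .
  qed
  ultimately show ?thesis by (simp add: integral_unique)
qed

lemma chi_nonneg: assumes y: "\<bar>y\<bar> < h" shows "0 \<le> chi y"
proof -
  let ?D = "\<lambda>z. 4 * (N z * R z - ((ReP z)^2 + (ImP z)^2)) / (N z)^2"
  have cD: "continuous_on (strip h) ?D"
    by (intro continuous_intros cont_N cont_ReP cont_ImP cont_R) (auto simp: N_nz)
  have "chi y = integral {0..2*pi} (\<lambda>x. ?D (Complex x y) - sxx (Complex x y))"
    unfolding chi_def using y by (intro integral_cong) (simp add: syy_eq)
  also have "\<dots> = integral {0..2*pi} (\<lambda>x. ?D (Complex x y)) - integral {0..2*pi} (\<lambda>x. sxx (Complex x y))"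
    by (rule integral_diff[OF int_line[OF cD y] int_line[OF cont_sxx y]])
  also have "\<dots> = integral {0..2*pi} (\<lambda>x. ?D (Complex x y))" using int_sxx[OF y] by simp
  also have "\<dots> \<ge> 0" by (rule integral_nonneg[OF int_line[OF cD y]]) (rule Delta_nonneg)
  finally show ?thesis .
qed

lemma phi_mono: assumes a: "\<bar>a\<bar> < h" and b: "\<bar>b\<bar> < h" and ab: "a \<le> b" shows "phi a \<le> phi b"
proof (rule DERIV_nonneg_imp_increasing_open[OF ab])
  fix x assume "a < x" "x < b"
  hence x: "\<bar>x\<bar> < h" using a b by (simp add: abs_less_iff)
  show "\<exists>y. (phi has_real_derivative y) (at x) \<and> 0 \<le> y"
    using phi_deriv[OF x] chi_nonneg[OF x] by blast
next
  show "continuous_on {a..b} phi"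
  proof (rule continuous_at_imp_continuous_on, intro ballI)
    fix x assume "x \<in> {a..b}"
    hence x: "\<bar>x\<bar> < h" using a b by (simp add: abs_less_iff)
    show "isCont phi x" by (rule DERIV_isCont[OF phi_deriv[OF x]])
  qed
qed

lemma psi_convex: "convex_on {-h<..<h} psi"
proof (rule convex_on_realI[where f'=phi])
  show "connected {-h<..<h}" by simp
  fix x assume "x \<in> {-h<..<h}"
  thus "(psi has_real_derivative phi x) (at x)" by (intro psi_deriv) (simp add: abs_less_iff)
next
  fix x y assume "x \<in> {-h<..<h}" "y \<in> {-h<..<h}" "x \<le> y"
  thus "phi x \<le> phi y" by (intro phi_mono) (auto simp: abs_less_iff)
qed

end

lemma sum_pair_UNIV: "(\<Sum>k\<in>(UNIV::('a::finite \<times> 'b::finite) set). F k) = (\<Sum>i\<in>UNIV. \<Sum>j\<in>UNIV. F (i, j))"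
  by (simp add: sum.cartesian_product)

lemma sum_sq_c22: fixes A :: "complex^2^2"
  shows "(\<Sum>k\<in>UNIV. (Re (A $ fst k $ snd k))^2 + (Im (A $ fst k $ snd k))^2) = (norm A)^2"
  unfolding sum_pair_UNIV by (simp add: sum_2 norm_c22 cmod_power2 add.assoc)

context lsetting begin

definition Bint :: "complex \<Rightarrow> real \<Rightarrow> nat \<Rightarrow> real" where
  "Bint E y n = integral {0..2*pi} (\<lambda>x. ln (norm (Mn v \<alpha> n E (Complex x y))))"

lemma norm_Mn_ge1: "1 \<le> norm (Mn v \<alpha> n E z)"
  by (rule det1_norm_ge1[OF det_Mn])

lemma Bint_convex_aux: "convex_on {-h<..<h} (\<lambda>y. integral {0..2*pi} (\<lambda>x. ln ((norm (Mn v \<alpha> n E (Complex x y)))^2)))"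
proof -
  interpret H: hfam "\<lambda>k z. Mn v \<alpha> n E z $ fst k $ snd k" "UNIV :: (2\<times>2) set" h
  proof
    show "finite (UNIV :: (2\<times>2) set)" by simp
    fix k :: "2\<times>2"
    show "(\<lambda>z. Mn v \<alpha> n E z $ fst k $ snd k) holomorphic_on strip h" by (rule Mn_hol)
    fix z assume z: "z \<in> strip h"
    show "Mn v \<alpha> n E (z + of_real (2*pi)) $ fst k $ snd k = Mn v \<alpha> n E z $ fst k $ snd k"
      using Mn_per[OF z] by simp
  next
    fix z
    show "0 < (\<Sum>k\<in>UNIV. (Re (Mn v \<alpha> n E z $ fst k $ snd k))^2 + (Im (Mn v \<alpha> n E z $ fst k $ snd k))^2)"
    proof -
      have "1 \<le> (norm (Mn v \<alpha> n E z))^2" using norm_Mn_ge1[of n E z] by (rule one_le_power)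
      thus ?thesis unfolding sum_sq_c22 by linarith
    qed
  qed
  have "H.psi = (\<lambda>y. integral {0..2*pi} (\<lambda>x. ln ((norm (Mn v \<alpha> n E (Complex x y)))^2)))"
    unfolding H.psi_def H.N_def sum_sq_c22 ..
  thus ?thesis using H.psi_convex by simp
qed

lemma Bint_convex: "convex_on {-h<..<h} (\<lambda>y. Bint E y n)"
proof -
  have "(\<lambda>y. integral {0..2*pi} (\<lambda>x. ln ((norm (Mn v \<alpha> n E (Complex x y)))^2))) = (\<lambda>y. 2 * Bint E y n)"
  proof
    fix y
    have "integral {0..2*pi} (\<lambda>x. ln ((norm (Mn v \<alpha> n E (Complex x y)))^2)) =
          integral {0..2*pi} (\<lambda>x. 2 * ln (norm (Mn v \<alpha> n E (Complex x y))))"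
    proof (rule integral_cong)
      fix x
      from ln_realpow[of "norm (Mn v \<alpha> n E (Complex x y))" 2]
      show "ln ((norm (Mn v \<alpha> n E (Complex x y)))^2) = 2 * ln (norm (Mn v \<alpha> n E (Complex x y)))"
        by simp
    qed
    also have "\<dots> = 2 * Bint E y n" unfolding Bint_def by simp
    finally show "integral {0..2*pi} (\<lambda>x. ln ((norm (Mn v \<alpha> n E (Complex x y)))^2)) = 2 * Bint E y n" .
  qed
  hence "convex_on {-h<..<h} (\<lambda>y. 2 * Bint E y n)" using Bint_convex_aux[of n E] by simp
  hence "convex_on {-h<..<h} (\<lambda>y. (1/2) * (2 * Bint E y n))" by (rule convex_on_cmul[rotated]) simp
  thus ?thesis by simp
qed

lemma lnnorm_bounds: "lnM n E z \<le> ln (norm (Mn v \<alpha> n E z))"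
   "ln (norm (Mn v \<alpha> n E z)) \<le> ln (sqrt 2) + lnM n E z"
proof -
  have o1: "1 \<le> mat_opnorm (Mn v \<alpha> n E z)" by (rule opnorm_Mn_ge1)
  show "lnM n E z \<le> ln (norm (Mn v \<alpha> n E z))"
    unfolding lnM_def using o1 opnorm_le_norm[of "Mn v \<alpha> n E z"] by (subst ln_le_cancel_iff) auto
  have "ln (norm (Mn v \<alpha> n E z)) \<le> ln (sqrt 2 * mat_opnorm (Mn v \<alpha> n E z))"
    using o1 norm_le_sqrt2_opnorm[of "Mn v \<alpha> n E z"] norm_Mn_ge1[of n E z] by (subst ln_le_cancel_iff) auto
  also have "\<dots> = ln (sqrt 2) + lnM n E z" unfolding lnM_def using o1 by (simp add: ln_mult)
  finally show "ln (norm (Mn v \<alpha> n E z)) \<le> ln (sqrt 2) + lnM n E z" .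
qed

lemma lnnorm_cont: "\<bar>y\<bar> < h \<Longrightarrow> continuous_on UNIV (\<lambda>x. ln (norm (Mn v \<alpha> n E (Complex x y))))"
proof (rule continuous_on_ln)
  assume y: "\<bar>y\<bar> < h"
  have "continuous_on UNIV (\<lambda>x. Mn v \<alpha> n E (Complex x y))"
    by (rule continuous_on_compose2[OF Mn_cont continuous_on_Complex_x]) (auto simp: y)
  thus "continuous_on UNIV (\<lambda>x. norm (Mn v \<alpha> n E (Complex x y)))"
    by (intro continuous_intros)
  show "\<forall>x\<in>UNIV. norm (Mn v \<alpha> n E (Complex x y)) \<noteq> 0"
    using norm_Mn_ge1 by (metis not_one_le_zero)
qed

lemma lnnorm_int: "\<bar>y\<bar> < h \<Longrightarrow> (\<lambda>x. ln (norm (Mn v \<alpha> n E (Complex x y)))) integrable_on {a..b}"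
  by (rule integrable_continuous_interval, rule continuous_on_subset[OF lnnorm_cont]) auto

lemma AB_bound: assumes y: "\<bar>y\<bar> < h" shows "\<bar>Bint E y n - Aint E y n\<bar> \<le> 2*pi * ln (sqrt 2)"
proof -
  have "Aint E y n \<le> Bint E y n" unfolding Aint_def Bint_def
    by (rule integral_le[OF lnM_int[OF y] lnnorm_int[OF y]]) (rule lnnorm_bounds)
  moreover have "Bint E y n \<le> integral {0..2*pi} (\<lambda>x. ln (sqrt 2) + lnM n E (Complex x y))"
    unfolding Bint_def
    by (rule integral_le[OF lnnorm_int[OF y] integrable_add[OF integrable_const_ivl lnM_int[OF y]]])
       (rule lnnorm_bounds)
  moreover have "integral {0..2*pi} (\<lambda>x. ln (sqrt 2) + lnM n E (Complex x y)) = 2*pi * ln (sqrt 2) + Aint E y n"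
    unfolding Aint_def by (simp add: integral_add[OF integrable_const_ivl lnM_int[OF y]])
  ultimately show ?thesis by linarith
qed

lemma Bint_tendsto: assumes y: "\<bar>y\<bar> < h" shows "(\<lambda>n. Bint E y n / real n) \<longlonglongrightarrow> 2*pi * Lyap v \<alpha> E y"
proof -
  have d: "(\<lambda>n. (Bint E y n - Aint E y n) / real n) \<longlonglongrightarrow> 0"
  proof (rule Lim_null_comparison[OF _ tendsto_divide_0[OF tendsto_const filterlim_at_top_imp_at_infinity[OF filterlim_real_sequentially]]])
    show "\<forall>\<^sub>F n in sequentially. norm ((Bint E y n - Aint E y n) / real n) \<le> 2*pi * ln (sqrt 2) / real n"
      using AB_bound[OF y] by (auto simp: divide_right_mono abs_divide intro!: always_eventually)
  qed
  have "(\<lambda>n. Aint E y n / real n + (Bint E y n - Aint E y n) / real n) \<longlonglongrightarrow> 2*pi * Lyap v \<alpha> E y + 0"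
    by (intro tendsto_add Lyap_tendsto[OF y] d)
  thus ?thesis by (simp add: diff_divide_distrib)
qed

lemma Lyap_convex:
  assumes a: "\<bar>a\<bar> < h" and b: "\<bar>b\<bar> < h" and t: "0 \<le> t" "t \<le> 1"
  shows "Lyap v \<alpha> E ((1 - t) * a + t * b) \<le> (1 - t) * Lyap v \<alpha> E a + t * Lyap v \<alpha> E b"
proof -
  have c: "\<bar>(1 - t) * a + t * b\<bar> < h"
  proof -
    have "\<bar>(1 - t) * a + t * b\<bar> \<le> (1 - t) * \<bar>a\<bar> + t * \<bar>b\<bar>"
      using t by (metis abs_mult abs_of_nonneg abs_triangle_ineq diff_ge_0_iff_ge)
    also have "\<dots> < h"
    proof (cases "t = 0")
      case True thus ?thesis using a by simp
    next
      case False
      hence "t * \<bar>b\<bar> < t * h" using t b by simp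
      moreover have "(1 - t) * \<bar>a\<bar> \<le> (1 - t) * h" using t a by (intro mult_left_mono) auto
      ultimately show ?thesis by (simp add: algebra_simps)
    qed
    finally show ?thesis .
  qed
  have ineq: "Bint E ((1 - t) * a + t * b) n / real n \<le> (1 - t) * (Bint E a n / real n) + t * (Bint E b n / real n)" for n
  proof -
    have "Bint E ((1 - t) * a + t * b) n \<le> (1 - t) * Bint E a n + t * Bint E b n"
      using convex_onD[OF Bint_convex[of E n], of t a b] a b t by (simp add: abs_less_iff)
    thus ?thesis by (simp add: divide_right_mono add_divide_distrib[symmetric])
  qed
  have "2*pi * Lyap v \<alpha> E ((1 - t) * a + t * b) \<le> (1 - t) * (2*pi * Lyap v \<alpha> E a) + t * (2*pi * Lyap v \<alpha> E b)"
    by (rule LIMSEQ_le[OF Bint_tendsto[OF c] tendsto_add[OF tendsto_mult[OF tendsto_const Bint_tendsto[OF a]] tendsto_mult[OF tendsto_const Bint_tendsto[OF b]]]])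
       (use ineq in auto)
  hence "2*pi * Lyap v \<alpha> E ((1 - t) * a + t * b) \<le> 2*pi * ((1 - t) * Lyap v \<alpha> E a + t * Lyap v \<alpha> E b)"
    by (simp add: algebra_simps)
  thus ?thesis by (rule mult_left_le_imp_le) simp
qed

end

lemma cont_pair_gen: "continuous_on S (\<lambda>p::real\<times>real. Complex (snd p) (fst p))"
  unfolding Complex_eq_ri by (intro continuous_intros)

section \<open>Mean of the real part of a periodic holomorphic function is constant\<close>

lemma Re_integral_const:
  assumes f: "f holomorphic_on strip d"
    and fper: "\<And>z. z \<in> strip d \<Longrightarrow> f (z + of_real (2*pi)) = f z"
    and y1: "\<bar>y1\<bar> < d" and y2: "\<bar>y2\<bar> < d"
  shows "integral {0..2*pi} (\<lambda>x. Re (f (Complex x y1))) = integral {0..2*pi} (\<lambda>x. Re (f (Complex x y2)))"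
proof -
  define G where "G y = integral {0..2*pi} (\<lambda>x. Re (f (Complex x y)))" for y
  have f1: "deriv f holomorphic_on strip d" by (rule holomorphic_deriv[OF f open_strip])
  have cf: "continuous_on (strip d) f" by (rule holomorphic_on_imp_continuous_on[OF f])
  have cf1: "continuous_on (strip d) (deriv f)" by (rule holomorphic_on_imp_continuous_on[OF f1])
  have G': "(G has_real_derivative 0) (at y)" if y: "\<bar>y\<bar> < d" for y
  proof -
    have yU: "y \<in> {-d<..<d}" using y by (simp add: abs_less_iff)
    have "((\<lambda>y. integral (cbox 0 (2*pi)) (\<lambda>x. Re (f (Complex x y)))) has_field_derivative
          integral (cbox 0 (2*pi)) (\<lambda>x. - Im (deriv f (Complex x y)))) (at y within {-d<..<d})"
    proof (rule leibniz_rule_field_derivative[where fx="\<lambda>y x. - Im (deriv f (Complex x y))"])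
      fix y' x assume "y' \<in> {-d<..<d}" "x \<in> cbox 0 (2*pi)"
      hence y': "\<bar>y'\<bar> < d" by (simp add: abs_less_iff)
      show "((\<lambda>y. Re (f (Complex x y))) has_field_derivative - Im (deriv f (Complex x y'))) (at y' within {-d<..<d})"
        by (rule has_field_derivative_at_within[OF dy_Re[OF f y']])
    next
      fix y' assume "y' \<in> {-d<..<d}"
      hence y': "\<bar>y'\<bar> < d" by (simp add: abs_less_iff)
      have "continuous_on UNIV (\<lambda>x. Re (f (Complex x y')))"
        by (intro continuous_intros continuous_on_compose2[OF cf continuous_on_Complex_x]) (auto simp: y')
      thus "(\<lambda>x. Re (f (Complex x y'))) integrable_on cbox 0 (2*pi)"
        by (metis continuous_on_subset integrable_continuous top_greatest)
    next
      have "continuous_on ({-d<..<d} \<times> {0..2*pi}) (\<lambda>p. - Im (deriv f (Complex (snd p) (fst p))))"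
        by (intro continuous_intros continuous_on_compose2[OF cf1 cont_pair_gen]) (auto simp: abs_less_iff)
      thus "continuous_on ({-d<..<d} \<times> cbox 0 (2*pi)) (\<lambda>(y, x). - Im (deriv f (Complex x y)))"
        by (simp add: case_prod_beta)
    qed (use yU in auto)
    moreover have "integral (cbox 0 (2*pi)) (\<lambda>x. - Im (deriv f (Complex x y))) = 0"
    proof -
      have "((\<lambda>x. Im (deriv f (Complex x y))) has_integral (Im (f (Complex (2*pi) y)) - Im (f (Complex 0 y)))) {0..2*pi}"
      proof (rule fundamental_theorem_of_calculus)
        fix x assume "x \<in> {0..2*pi}"
        show "((\<lambda>t. Im (f (Complex t y))) has_vector_derivative Im (deriv f (Complex x y))) (at x within {0..2*pi})"
          using dx_Im[OF f y, of x] unfolding has_real_derivative_iff_has_vector_derivative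
          by (rule has_vector_derivative_at_within)
      qed simp
      moreover have "f (Complex (2*pi) y) = f (Complex 0 y)"
      proof -
        have e: "Complex (2*pi) y = Complex 0 y + of_real (2*pi)" by (simp add: complex_eq_iff)
        show ?thesis unfolding e by (rule fper) (simp add: y)
      qed
      ultimately have "integral {0..2*pi} (\<lambda>x. Im (deriv f (Complex x y))) = 0"
        by (simp add: integral_unique)
      thus ?thesis by (simp add: integral_neg)
    qed
    ultimately show ?thesis unfolding G_def using at_within_open[OF yU] by simp
  qed
  have d0: "-d < d" using y1 by simp
  have i1: "y1 \<in> {-d<..<d}" "y2 \<in> {-d<..<d}" using y1 y2 by (auto simp: abs_less_iff)
  have dG: "\<And>x. x \<in> {-d<..<d} \<Longrightarrow> DERIV G x :> 0" by (rule G') (simp add: abs_less_iff)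
  have "G y1 = G y2" by (rule DERIV_isconst3[OF d0 i1 dG])
  thus ?thesis unfolding G_def .
qed

context lsetting begin

lemma v_per_int: assumes z: "z \<in> strip h" shows "v (z + of_real (2*pi*real_of_int k)) = v z"
proof -
  define f where "f t = v (z + of_real t)" for t
  have fp: "f (t + 2*pi) = f t" for t
  proof -
    have "z + of_real t \<in> strip h" using z by (simp only: strip_shift)
    hence "v (z + of_real t + of_real (2*pi)) = v (z + of_real t)" by (rule per)
    thus ?thesis unfolding f_def by (simp add: algebra_simps)
  qed
  have "f (0 + 2*pi*real_of_int k) = f 0" by (rule periodic_int[of f, OF fp])
  thus ?thesis unfolding f_def by simp
qed

lemma small_Im_v: assumes e: "0 < \<epsilon>" shows "\<exists>\<delta>>0. \<delta> < h \<and> (\<forall>z. \<bar>Im z\<bar> < \<delta> \<longrightarrow> \<bar>Im (v z)\<bar> < \<epsilon>)"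
proof -
  define K where "K = cbox (Complex 0 (-h/2)) (Complex (2*pi) (h/2))"
  have Kc: "compact K" unfolding K_def by simp
  have KS: "K \<subseteq> strip h" unfolding K_def cbox_complex_eq strip_def using hpos by auto
  have "continuous_on K v" using holomorphic_on_imp_continuous_on[OF hol] KS by (rule continuous_on_subset)
  hence "uniformly_continuous_on K v" using Kc by (rule compact_uniformly_continuous)
  then obtain d0 where d0: "d0 > 0" "\<And>x x'. x \<in> K \<Longrightarrow> x' \<in> K \<Longrightarrow> dist x' x < d0 \<Longrightarrow> dist (v x') (v x) < \<epsilon>"
    unfolding uniformly_continuous_on_def using e by metis
  define \<delta> where "\<delta> = min d0 (h/2)"
  have "\<delta> > 0" "\<delta> < h" using d0 hpos by (auto simp: \<delta>_def)
  moreover have "\<bar>Im (v z)\<bar> < \<epsilon>" if z: "\<bar>Im z\<bar> < \<delta>" for z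
  proof -
    define k where "k = floor (Re z / (2*pi))"
    define z' where "z' = z + of_real (2*pi*real_of_int (-k))"
    have "real_of_int k \<le> Re z/(2*pi)" "Re z/(2*pi) < real_of_int k + 1"
      unfolding k_def by linarith+
    hence rz: "0 \<le> Re z'" "Re z' \<le> 2*pi" unfolding z'_def by (simp_all add: field_simps)
    have imz: "Im z' = Im z" unfolding z'_def by simp
    have zs: "z \<in> strip h" using z hpos unfolding strip_def \<delta>_def by auto
    have vz: "v z' = v z" unfolding z'_def by (rule v_per_int[OF zs])
    have z'K: "z' \<in> K" unfolding K_def cbox_complex_eq using rz imz z by (auto simp: \<delta>_def)
    have wK: "complex_of_real (Re z') \<in> K" unfolding K_def cbox_complex_eq using rz hpos by auto
    have "dist z' (complex_of_real (Re z')) = \<bar>Im z\<bar>"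
      by (simp add: dist_norm cmod_def imz)
    hence "dist z' (complex_of_real (Re z')) < d0" using z by (simp add: \<delta>_def)
    hence dd: "dist (v z') (v (complex_of_real (Re z'))) < \<epsilon>" by (rule d0(2)[OF wK z'K])
    have im0: "Im (v (complex_of_real (Re z'))) = 0" using realv[of "Re z'"] by (simp add: complex_is_Real_iff)
    have "\<bar>Im (v z')\<bar> = \<bar>Im (v z' - v (complex_of_real (Re z')))\<bar>" using im0 by simp
    also have "\<dots> \<le> cmod (v z' - v (complex_of_real (Re z')))" by (rule abs_Im_le_cmod)
    also have "\<dots> < \<epsilon>" using dd by (simp add: dist_norm)
    finally show ?thesis using vz by simp
  qed
  ultimately show ?thesis by blast
qed

lemma v_bound: "\<exists>B. 0 \<le> B \<and> (\<forall>z\<in>strip h. cmod (v z) \<le> B)"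
proof -
  obtain B where "\<forall>x\<in>v ` strip h. norm x \<le> B" using bdd unfolding bounded_iff by blast
  hence "\<forall>z\<in>strip h. cmod (v z) \<le> max B 0" by auto
  thus ?thesis by (intro exI[of _ "max B 0"]) auto
qed

primrec itr :: "complex \<Rightarrow> complex \<Rightarrow> complex \<Rightarrow> nat \<Rightarrow> complex" where
  "itr E w z 0 = w"
| "itr E w z (Suc k) = E - v (z + of_real (real (Suc k) * \<alpha>)) - 1 / itr E w z k"

lemma Smat_mv: "Smat v E t *v x = vector [(E - v t) * x$1 - x$2, x$1]"
  by (simp add: vec_eq_iff forall_2 mv_1 mv_2 Smat_entries)

lemma Mn_itr_conj:
  "(\<forall>j<k. itr E w z j \<noteq> 0) \<Longrightarrow>
   (Mn v \<alpha> k E z *v vector [w, 1])$1 = (\<Prod>j<k. itr E w z j) * itr E w z k \<and>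
   (Mn v \<alpha> k E z *v vector [w, 1])$2 = (\<Prod>j<k. itr E w z j)"
proof (induction k)
  case 0
  show ?case by (simp add: matrix_vector_mul_lid)
next
  case (Suc k)
  have nzs: "\<forall>j<k. itr E w z j \<noteq> 0" using Suc.prems by auto
  have IH1: "(Mn v \<alpha> k E z *v vector [w, 1])$1 = (\<Prod>j<k. itr E w z j) * itr E w z k"
    using Suc.IH[OF nzs] by blast
  have IH2: "(Mn v \<alpha> k E z *v vector [w, 1])$2 = (\<Prod>j<k. itr E w z j)"
    using Suc.IH[OF nzs] by blast
  have nzk: "itr E w z k \<noteq> 0" using Suc.prems by auto
  have eq: "Mn v \<alpha> (Suc k) E z *v vector [w, 1] = Smat v E (z + of_real (real (Suc k) * \<alpha>)) *v (Mn v \<alpha> k E z *v vector [w, 1])"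
    by (simp only: Mn.simps matrix_vector_mul_assoc)
  have c1: "(Mn v \<alpha> (Suc k) E z *v vector [w, 1])$1 = (\<Prod>j<Suc k. itr E w z j) * itr E w z (Suc k)"
    unfolding eq Smat_mv vector_2 IH1 IH2 prod.lessThan_Suc itr.simps
    using nzk by (simp add: field_simps)
  have c2: "(Mn v \<alpha> (Suc k) E z *v vector [w, 1])$2 = (\<Prod>j<Suc k. itr E w z j)"
    unfolding eq Smat_mv vector_2 IH1 IH2 prod.lessThan_Suc by simp
  show ?case using c1 c2 by blast
qed

lemma Mn_itr:
  assumes nz: "\<And>j. j < k \<Longrightarrow> itr E w z j \<noteq> 0"
  shows "(Mn v \<alpha> k E z *v vector [w, 1])$1 = (\<Prod>j<k. itr E w z j) * itr E w z k"
    and "(Mn v \<alpha> k E z *v vector [w, 1])$2 = (\<Prod>j<k. itr E w z j)"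
  using Mn_itr_conj[of k E w z] nz by auto

end

lemma Im_inv: "Im (1 / u) = - Im u / (cmod u)^2"
  by (simp add: Im_divide cmod_power2)

lemma cmod_inv_le: "0 < c \<Longrightarrow> c \<le> \<bar>Im u\<bar> \<Longrightarrow> cmod (1 / u) \<le> 1 / c"
proof -
  assume c: "0 < c" "c \<le> \<bar>Im u\<bar>"
  have "c \<le> cmod u" using c abs_Im_le_cmod[of u] by linarith
  thus ?thesis using c by (simp add: norm_divide frac_le)
qed

locale hyp = lsetting +
  fixes E :: complex and \<sigma> c \<delta> B :: real
  assumes sig: "\<sigma> = 1 \<or> \<sigma> = -1"
    and cpos: "0 < c" and dpos: "0 < \<delta>" and dh: "\<delta> \<le> h"
    and cone: "\<And>z. \<bar>Im z\<bar> < \<delta> \<Longrightarrow> c \<le> \<sigma> * Im (E - v z)"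
    and Bnn: "0 \<le> B" and vB: "\<And>z. z \<in> strip h \<Longrightarrow> cmod (v z) \<le> B"
begin

definition "R0 = cmod E + B + 1 + 1 / c"

lemma abs_sig: "\<bar>\<sigma>\<bar> = 1" using sig by auto

lemma sig_abs_Im: "\<sigma> * Im u \<le> \<bar>Im u\<bar>" using sig by auto

lemma strip_d_h: "strip \<delta> \<subseteq> strip h" using dh by (auto simp: strip_def)

lemma Im_shift[simp]: "Im (z + of_real r) = Im z" by simp

lemma it_cone:
  assumes z: "\<bar>Im z\<bar> < \<delta>" and w: "0 < \<sigma> * Im w"
  shows "0 < \<sigma> * Im (itr E w z k) \<and> (1 \<le> k \<longrightarrow> c \<le> \<sigma> * Im (itr E w z k))"
proof (induction k)
  case 0 then show ?case using w by simp
next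
  case (Suc k)
  let ?t = "z + of_real (real (Suc k) * \<alpha>)"
  let ?u = "itr E w z k"
  have ct: "c \<le> \<sigma> * Im (E - v ?t)" by (rule cone) (simp add: z)
  have "\<sigma> * Im (- (1 / ?u)) = \<sigma> * Im ?u / (cmod ?u)^2" by (simp add: Im_inv)
  also have "\<dots> \<ge> 0" using Suc by simp
  finally have "c \<le> \<sigma> * Im (itr E w z (Suc k))" using ct by (simp add: algebra_simps)
  thus ?case using cpos by simp
qed

lemma it_nz: "\<bar>Im z\<bar> < \<delta> \<Longrightarrow> 0 < \<sigma> * Im w \<Longrightarrow> itr E w z k \<noteq> 0"
  using it_cone[of z w k] by auto

lemma it_lower: "\<bar>Im z\<bar> < \<delta> \<Longrightarrow> 0 < \<sigma> * Im w \<Longrightarrow> 1 \<le> k \<Longrightarrow> c \<le> cmod (itr E w z k)"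
  using it_cone[of z w k] sig_abs_Im[of "itr E w z k"] abs_Im_le_cmod[of "itr E w z k"] by linarith

lemma it_upper:
  assumes z: "\<bar>Im z\<bar> < \<delta>" and w: "0 < \<sigma> * Im w" "1 \<le> cmod w" and k: "1 \<le> k"
  shows "cmod (itr E w z k) \<le> R0"
proof -
  obtain j where j: "k = Suc j" using k by (cases k) auto
  let ?t = "z + of_real (real (Suc j) * \<alpha>)"
  have vt: "cmod (v ?t) \<le> B" by (rule vB) (use z dh in \<open>simp add: strip_def\<close>)
  have inv: "cmod (1 / itr E w z j) \<le> 1 + 1 / c"
  proof (cases j)
    case 0
    have e: "cmod (1 / itr E w z j) = 1 / cmod w" unfolding 0 by (simp add: norm_divide)
    have "1 / cmod w \<le> 1" using w(2) by (simp add: divide_le_eq)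
    moreover have "0 \<le> 1 / c" using cpos by simp
    ultimately show ?thesis unfolding e by linarith
  next
    case (Suc i)
    have "c \<le> \<bar>Im (itr E w z j)\<bar>" using it_cone[OF z w(1), of j] sig_abs_Im[of "itr E w z j"] Suc by auto
    hence "cmod (1 / itr E w z j) \<le> 1 / c" by (rule cmod_inv_le[OF cpos])
    thus ?thesis by simp
  qed
  have "cmod (itr E w z k) \<le> cmod E + cmod (v ?t) + cmod (1 / itr E w z j)"
    unfolding j itr.simps
    using norm_triangle_ineq4[of "E - v ?t" "1 / itr E w z j"] norm_triangle_ineq4[of E "v ?t"] by linarith
  also have "\<dots> \<le> R0" unfolding R0_def using vt inv by simp
  finally show ?thesis .
qed

lemma it_hol: assumes w: "0 < \<sigma> * Im w" shows "(\<lambda>z. itr E w z k) holomorphic_on strip \<delta>"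
proof (induction k)
  case 0 then show ?case by simp
next
  case (Suc k)
  have hv: "(\<lambda>z. v (z + of_real (real (Suc k) * \<alpha>))) holomorphic_on strip \<delta>"
    by (rule holomorphic_on_subset[OF hol_shift strip_d_h])
  show ?case unfolding itr.simps
    by (intro holomorphic_intros hv Suc) (use it_nz w in \<open>auto simp: strip_def\<close>)
qed

lemma it_per: assumes z: "z \<in> strip \<delta>" shows "itr E w (z + of_real (2*pi)) k = itr E w z k"
proof (induction k)
  case 0 then show ?case by simp
next
  case (Suc k)
  define t where "t = z + of_real (real (Suc k) * \<alpha>)"
  have ts: "t \<in> strip h" using z strip_d_h unfolding t_def by (auto simp: strip_def)
  have "v (z + of_real (2*pi) + of_real (real (Suc k) * \<alpha>)) = v (t + of_real (2*pi))"
    unfolding t_def by (rule arg_cong[where f=v]) (simp add: algebra_simps)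
  also have "\<dots> = v t" by (rule per[OF ts])
  finally have "v (z + of_real (2*pi) + of_real (real (Suc k) * \<alpha>)) = v (z + of_real (real (Suc k) * \<alpha>))"
    unfolding t_def .
  thus ?case using Suc by (simp only: itr.simps)
qed

end

lemma nonpos_Reals_Im: "u \<in> \<real>\<^sub>\<le>\<^sub>0 \<Longrightarrow> Im u = 0"
  by (auto simp: nonpos_Reals_def)

lemma Q_contract:
  fixes a b e :: complex and \<sigma> c :: real
  assumes c: "0 < c" and e: "c \<le> \<sigma> * Im e" and a: "c \<le> \<sigma> * Im a" and b: "c \<le> \<sigma> * Im b"
    and sig: "\<sigma> = 1 \<or> \<sigma> = -1"
  shows "(cmod ((e - 1/a) - (e - 1/b)))^2 / ((\<sigma> * Im (e - 1/a)) * (\<sigma> * Im (e - 1/b)))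
     \<le> (1/(1+c^2))^2 * ((cmod (a - b))^2 / ((\<sigma> * Im a) * (\<sigma> * Im b)))"
proof -
  define A where "A = (cmod a)^2"
  define B where "B = (cmod b)^2"
  define ta where "ta = \<sigma> * Im a"
  define tb where "tb = \<sigma> * Im b"
  define s where "s = \<sigma> * Im e"
  define D where "D = (cmod (a - b))^2"
  have ta: "c \<le> ta" and tb: "c \<le> tb" and s: "c \<le> s" using a b e by (simp_all add: ta_def tb_def s_def)
  have anz: "a \<noteq> 0" using a c by auto
  have bnz: "b \<noteq> 0" using b c by auto
  have Apos: "0 < A" using anz by (simp add: A_def)
  have Bpos: "0 < B" using bnz by (simp add: B_def)
  have sq: "\<sigma> * \<sigma> = 1" using sig by auto
  have Ata: "ta * ta \<le> A"
  proof -
    have "ta * ta = (Im a)^2" using sq by (simp add: ta_def power2_eq_square algebra_simps)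
    also have "\<dots> \<le> A" by (simp add: A_def cmod_power2)
    finally show ?thesis .
  qed
  have Btb: "tb * tb \<le> B"
  proof -
    have "tb * tb = (Im b)^2" using sq by (simp add: tb_def power2_eq_square algebra_simps)
    also have "\<dots> \<le> B" by (simp add: B_def cmod_power2)
    finally show ?thesis .
  qed
  have ima: "\<sigma> * Im (e - 1/a) = s + ta / A" by (simp add: Im_inv s_def ta_def A_def algebra_simps)
  have imb: "\<sigma> * Im (e - 1/b) = s + tb / B" by (simp add: Im_inv s_def tb_def B_def algebra_simps)
  have num: "(cmod ((e - 1/a) - (e - 1/b)))^2 = D / (A * B)"
  proof -
    have "(e - 1/a) - (e - 1/b) = (a - b) / (a * b)" using anz bnz by (simp add: field_simps)
    hence "cmod ((e - 1/a) - (e - 1/b)) = cmod (a - b) / (cmod a * cmod b)" by (simp add: norm_divide norm_mult)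
    thus ?thesis by (simp add: D_def A_def B_def power_divide power_mult_distrib)
  qed
  have fa: "(1 + c^2) * ta \<le> s * A + ta"
  proof -
    have "c * ta \<le> ta * ta" using ta c by (simp add: mult_right_mono)
    hence "c * ta \<le> A" using Ata by linarith
    hence "c * (c * ta) \<le> c * A" using c by simp
    moreover have "c * A \<le> s * A" using s Apos by (simp add: mult_right_mono)
    ultimately show ?thesis by (simp add: algebra_simps power2_eq_square)
  qed
  have fb: "(1 + c^2) * tb \<le> s * B + tb"
  proof -
    have "c * tb \<le> tb * tb" using tb c by (simp add: mult_right_mono)
    hence "c * tb \<le> B" using Btb by linarith
    hence "c * (c * tb) \<le> c * B" using c by simp
    moreover have "c * B \<le> s * B" using s Bpos by (simp add: mult_right_mono)
    ultimately show ?thesis by (simp add: algebra_simps power2_eq_square)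
  qed
  have tapos: "0 < ta" and tbpos: "0 < tb" using ta tb c by linarith+
  have lhs: "(cmod ((e - 1/a) - (e - 1/b)))^2 / ((\<sigma> * Im (e - 1/a)) * (\<sigma> * Im (e - 1/b)))
      = D / ((s * A + ta) * (s * B + tb))"
    unfolding num ima imb using Apos Bpos by (simp add: field_simps)
  have prod: "((1 + c^2) * ta) * ((1 + c^2) * tb) \<le> (s * A + ta) * (s * B + tb)"
  proof (rule mult_mono[OF fa fb])
    have p1: "0 \<le> (1 + c^2) * ta" using tapos by simp
    show "0 \<le> s * A + ta" by (rule order_trans[OF p1 fa])
    show "0 \<le> (1 + c^2) * tb" using tbpos by simp
  qed
  have pos1: "0 < ((1 + c^2) * ta) * ((1 + c^2) * tb)" using tapos tbpos by (simp add: add_pos_nonneg)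
  have D0: "0 \<le> D" by (simp add: D_def)
  have "D / ((s * A + ta) * (s * B + tb)) \<le> D / (((1 + c^2) * ta) * ((1 + c^2) * tb))"
    by (rule divide_left_mono[OF prod D0]) (use pos1 prod in auto)
  also have "\<dots> = (1/(1+c^2))^2 * (D / (ta * tb))"
    by (simp add: field_simps power2_eq_square)
  finally show ?thesis unfolding lhs by (simp add: D_def ta_def tb_def)
qed

lemma ln_diff_le: fixes c x y :: real shows "0 < c \<Longrightarrow> c \<le> x \<Longrightarrow> c \<le> y \<Longrightarrow> \<bar>ln x - ln y\<bar> \<le> \<bar>x - y\<bar> / c"
proof -
  assume c: "0 < c" "c \<le> x" "c \<le> y"
  have g: "ln x - ln y \<le> \<bar>x - y\<bar> / c" if xy: "c \<le> x" "c \<le> y" for x y :: real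
  proof -
    have xp1: "0 < x" using xy c by linarith
    have xp2: "0 < y" using xy c by linarith
    note xp = xp1 xp2
    have "ln x - ln y = ln (x / y)" using xp by (simp add: ln_div)
    also have "\<dots> \<le> x / y - 1" using xp by (intro ln_le_minus_one) simp
    also have "\<dots> = (x - y) / y" using xp by (simp add: field_simps)
    also have "\<dots> \<le> \<bar>x - y\<bar> / y" using xp by (simp add: divide_right_mono)
    also have "\<dots> \<le> \<bar>x - y\<bar> / c" using xp xy c by (intro divide_left_mono) auto
    finally show ?thesis .
  qed
  show ?thesis using g[of x y] g[of y x] c by (simp add: abs_minus_commute)
qed

context hyp begin

lemma lnit_const:
  assumes w: "0 < \<sigma> * Im w" and y1: "\<bar>y1\<bar> < \<delta>" and y2: "\<bar>y2\<bar> < \<delta>"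
  shows "integral {0..2*pi} (\<lambda>x. ln (cmod (itr E w (Complex x y1) k))) =
         integral {0..2*pi} (\<lambda>x. ln (cmod (itr E w (Complex x y2) k)))"
proof -
  define F where "F z = Ln (complex_of_real \<sigma> * itr E w z k)" for z
  have imF: "0 < Im (complex_of_real \<sigma> * itr E w z k)" if "z \<in> strip \<delta>" for z
    using it_cone[of z w k] that w by (simp add: strip_def)
  have Fhol: "F holomorphic_on strip \<delta>"
    unfolding F_def
  proof (rule holomorphic_on_Ln')
    show "\<And>z. z \<in> strip \<delta> \<Longrightarrow> complex_of_real \<sigma> * itr E w z k \<notin> \<real>\<^sub>\<le>\<^sub>0"
      using imF nonpos_Reals_Im by fastforce
    show "(\<lambda>z. complex_of_real \<sigma> * itr E w z k) holomorphic_on strip \<delta>"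
      by (intro holomorphic_intros it_hol[OF w])
  qed
  have Fper: "F (z + of_real (2*pi)) = F z" if "z \<in> strip \<delta>" for z
    unfolding F_def using it_per[OF that] by simp
  have ReF: "Re (F z) = ln (cmod (itr E w z k))" if "z \<in> strip \<delta>" for z
  proof -
    have nz: "complex_of_real \<sigma> * itr E w z k \<noteq> 0" using imF[OF that] by auto
    have "Re (F z) = ln (cmod (complex_of_real \<sigma> * itr E w z k))" unfolding F_def using nz by simp
    also have "\<dots> = ln (cmod (itr E w z k))" by (simp add: norm_mult abs_sig)
    finally show ?thesis .
  qed
  have "integral {0..2*pi} (\<lambda>x. ln (cmod (itr E w (Complex x y1) k))) = integral {0..2*pi} (\<lambda>x. Re (F (Complex x y1)))"
    using y1 by (intro integral_cong) (simp add: ReF)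
  also have "\<dots> = integral {0..2*pi} (\<lambda>x. Re (F (Complex x y2)))"
    by (rule Re_integral_const[OF Fhol Fper y1 y2])
  also have "\<dots> = integral {0..2*pi} (\<lambda>x. ln (cmod (itr E w (Complex x y2) k)))"
    using y2 by (intro integral_cong) (simp add: ReF)
  finally show ?thesis .
qed

end

lemma comp_le_norm: "cmod ((x::complex^2) $ i) \<le> norm x"
  unfolding norm_c2 using exhaust_2[of i] by (auto intro!: real_le_rsqrt)

lemma norm_c22_le_L1: "norm (A::complex^2^2) \<le> cmod (A$1$1) + cmod (A$1$2) + cmod (A$2$1) + cmod (A$2$2)"
proof -
  have "(norm A)^2 \<le> (cmod (A$1$1) + cmod (A$1$2) + cmod (A$2$1) + cmod (A$2$2))^2"
    unfolding norm_c22 by (simp add: power2_eq_square algebra_simps)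
  thus ?thesis by (rule power2_le_imp_le) simp
qed

lemma norm_via_cone:
  fixes M :: "complex^2^2" and \<sigma> :: real
  assumes sig: "\<bar>\<sigma>\<bar> = 1"
  shows "norm M \<le> 6 * (norm (M *v vector [of_real \<sigma> * \<i>, 1]) + norm (M *v vector [of_real (2*\<sigma>) * \<i>, 1]))"
proof -
  define P where "P = M *v vector [of_real \<sigma> * \<i>, 1]"
  define Q where "Q = M *v vector [of_real (2*\<sigma>) * \<i>, 1]"
  have su: "cmod (of_real \<sigma> * \<i>) = 1" using sig by (simp add: norm_mult)
  have snz: "of_real \<sigma> * \<i> \<noteq> 0" using sig by auto
  have e1: "M$i$1 = (Q$i - P$i) / (of_real \<sigma> * \<i>)" for i
  proof -
    have "Q$i - P$i = M$i$1 * (of_real \<sigma> * \<i>)"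
      using exhaust_2[of i] unfolding P_def Q_def by (auto simp: mv_1 mv_2 algebra_simps)
    thus ?thesis using snz by (simp add: field_simps)
  qed
  have e2: "M$i$2 = 2 * P$i - Q$i" for i
    using exhaust_2[of i] unfolding P_def Q_def by (auto simp: mv_1 mv_2 algebra_simps)
  have b1: "cmod (M$i$1) \<le> norm Q + norm P" for i
  proof -
    have "cmod (M$i$1) = cmod (Q$i - P$i)" unfolding e1[of i] using su by (simp add: norm_divide)
    also have "\<dots> \<le> cmod (Q$i) + cmod (P$i)" by (rule norm_triangle_ineq4)
    also have "\<dots> \<le> norm Q + norm P" using comp_le_norm[of Q i] comp_le_norm[of P i] by simp
    finally show ?thesis .
  qed
  have b2: "cmod (M$i$2) \<le> 2 * norm P + norm Q" for i
  proof -
    have "cmod (M$i$2) \<le> cmod (2 * P$i) + cmod (Q$i)" unfolding e2[of i] by (rule norm_triangle_ineq4)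
    also have "\<dots> \<le> 2 * norm P + norm Q" using comp_le_norm[of Q i] comp_le_norm[of P i] by (simp add: norm_mult)
    finally show ?thesis .
  qed
  have "norm M \<le> cmod (M$1$1) + cmod (M$1$2) + cmod (M$2$1) + cmod (M$2$2)" by (rule norm_c22_le_L1)
  also have "\<dots> \<le> (norm Q + norm P) + (2 * norm P + norm Q) + (norm Q + norm P) + (2 * norm P + norm Q)"
    by (intro add_mono b1 b2)
  also have "\<dots> \<le> 6 * (norm P + norm Q)" using norm_ge_zero[of P] norm_ge_zero[of Q] by simp
  finally show ?thesis unfolding P_def Q_def .
qed

context hyp begin

definition "mu = 1 / (1 + c^2)"
definition "pp z j = itr E (of_real \<sigma> * \<i>) z j"
definition "qq z j = itr E (of_real (2*\<sigma>) * \<i>) z j"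
definition "QQ z j = (cmod (pp z j - qq z j))^2 / ((\<sigma> * Im (pp z j)) * (\<sigma> * Im (qq z j)))"

lemma sig_sq: "\<sigma> * \<sigma> = 1" using sig by auto

lemma wp: "0 < \<sigma> * Im (of_real \<sigma> * \<i>)" "1 \<le> cmod (of_real \<sigma> * \<i>)"
  using sig by (auto simp: norm_mult)
lemma wq: "0 < \<sigma> * Im (of_real (2*\<sigma>) * \<i>)" "1 \<le> cmod (of_real (2*\<sigma>) * \<i>)"
  using sig by (auto simp: norm_mult)

lemma mu_pos: "0 < mu"
proof -
  have "0 < 1 + c^2" using cpos by (simp add: add_pos_nonneg)
  thus ?thesis by (simp add: mu_def)
qed

lemma mu_lt1: "mu < 1"
proof -
  have t: "0 < 1 + c^2" by (simp add: add_pos_nonneg)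
  have "1 < 1 + c^2" using cpos by simp
  thus ?thesis unfolding mu_def using divide_less_eq_1_pos[OF t, of 1] by simp
qed

lemma R0_pos: "0 < R0"
  unfolding R0_def using Bnn cpos by (simp add: add_nonneg_pos)

lemma QQ_step: assumes z: "\<bar>Im z\<bar> < \<delta>" and j: "1 \<le> j"
  shows "QQ z (Suc j) \<le> mu^2 * QQ z j"
proof -
  let ?e = "E - v (z + of_real (real (Suc j) * \<alpha>))"
  have "c \<le> \<sigma> * Im ?e" by (rule cone) (simp add: z)
  moreover have "c \<le> \<sigma> * Im (pp z j)" unfolding pp_def using it_cone[OF z wp(1), of j] j by simp
  moreover have "c \<le> \<sigma> * Im (qq z j)" unfolding qq_def using it_cone[OF z wq(1), of j] j by simp
  ultimately have "(cmod ((?e - 1 / pp z j) - (?e - 1 / qq z j)))^2 / ((\<sigma> * Im (?e - 1 / pp z j)) * (\<sigma> * Im (?e - 1 / qq z j)))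
     \<le> (1/(1+c^2))^2 * ((cmod (pp z j - qq z j))^2 / ((\<sigma> * Im (pp z j)) * (\<sigma> * Im (qq z j))))"
    by (intro Q_contract cpos sig)
  thus ?thesis unfolding QQ_def mu_def pp_def qq_def by (simp only: itr.simps)
qed

lemma QQ_nonneg: assumes z: "\<bar>Im z\<bar> < \<delta>" shows "0 \<le> QQ z j"
proof -
  have "0 < \<sigma> * Im (pp z j)" unfolding pp_def using it_cone[OF z wp(1), of j] by simp
  moreover have "0 < \<sigma> * Im (qq z j)" unfolding qq_def using it_cone[OF z wq(1), of j] by simp
  ultimately show ?thesis unfolding QQ_def by simp
qed

lemma pp_bounds: assumes z: "\<bar>Im z\<bar> < \<delta>" and j: "1 \<le> j"
  shows "c \<le> \<sigma> * Im (pp z j)" "c \<le> cmod (pp z j)" "cmod (pp z j) \<le> R0"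
  unfolding pp_def using it_cone[OF z wp(1), of j] j it_lower[OF z wp(1) j] it_upper[OF z wp j] by auto

lemma qq_bounds: assumes z: "\<bar>Im z\<bar> < \<delta>" and j: "1 \<le> j"
  shows "c \<le> \<sigma> * Im (qq z j)" "c \<le> cmod (qq z j)" "cmod (qq z j) \<le> R0"
  unfolding qq_def using it_cone[OF z wq(1), of j] j it_lower[OF z wq(1) j] it_upper[OF z wq j] by auto

lemma QQ_1: assumes z: "\<bar>Im z\<bar> < \<delta>" shows "QQ z 1 \<le> (2 * R0 / c)^2"
proof -
  have "cmod (pp z 1 - qq z 1) \<le> 2 * R0"
    using norm_triangle_ineq4[of "pp z 1" "qq z 1"] pp_bounds(3)[OF z, of 1] qq_bounds(3)[OF z, of 1] by simp
  hence n: "(cmod (pp z 1 - qq z 1))^2 \<le> (2 * R0)^2" by (rule power_mono[OF _ norm_ge_zero])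
  have d: "c * c \<le> (\<sigma> * Im (pp z 1)) * (\<sigma> * Im (qq z 1))"
    using pp_bounds(1)[OF z, of 1] qq_bounds(1)[OF z, of 1] cpos by (intro mult_mono) auto
  have "QQ z 1 \<le> (2 * R0)^2 / (c * c)"
    unfolding QQ_def using n d cpos by (intro frac_le) auto
  thus ?thesis by (simp add: power_divide power2_eq_square)
qed

lemma QQ_bound: assumes z: "\<bar>Im z\<bar> < \<delta>" shows "QQ z (Suc m) \<le> (mu^2)^m * (2 * R0 / c)^2"
proof (induction m)
  case 0 then show ?case using QQ_1[OF z] by simp
next
  case (Suc m)
  have "QQ z (Suc (Suc m)) \<le> mu^2 * QQ z (Suc m)" by (rule QQ_step[OF z]) simp
  also have "\<dots> \<le> mu^2 * ((mu^2)^m * (2 * R0 / c)^2)" by (rule mult_left_mono[OF Suc]) simp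
  finally show ?case by (simp add: algebra_simps)
qed

lemma pq_diff: assumes z: "\<bar>Im z\<bar> < \<delta>"
  shows "cmod (pp z (Suc m) - qq z (Suc m)) \<le> R0 * (2 * R0 / c) * mu^m"
proof -
  have tp: "0 < \<sigma> * Im (pp z (Suc m))" "\<sigma> * Im (pp z (Suc m)) \<le> R0"
    using pp_bounds[OF z, of "Suc m"] cpos sig_abs_Im[of "pp z (Suc m)"] abs_Im_le_cmod[of "pp z (Suc m)"] by auto
  have tq: "0 < \<sigma> * Im (qq z (Suc m))" "\<sigma> * Im (qq z (Suc m)) \<le> R0"
    using qq_bounds[OF z, of "Suc m"] cpos sig_abs_Im[of "qq z (Suc m)"] abs_Im_le_cmod[of "qq z (Suc m)"] by auto
  define D where "D = (\<sigma> * Im (pp z (Suc m))) * (\<sigma> * Im (qq z (Suc m)))"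
  have "0 < D" unfolding D_def using tp(1) tq(1) by (rule mult_pos_pos)
  hence Dnz: "D \<noteq> 0" by simp
  have eq: "(cmod (pp z (Suc m) - qq z (Suc m)))^2 = QQ z (Suc m) * ((\<sigma> * Im (pp z (Suc m))) * (\<sigma> * Im (qq z (Suc m))))"
    unfolding QQ_def D_def[symmetric] using Dnz by simp
  have "(\<sigma> * Im (pp z (Suc m))) * (\<sigma> * Im (qq z (Suc m))) \<le> R0 * R0"
    using tp tq by (intro mult_mono) auto
  hence "(cmod (pp z (Suc m) - qq z (Suc m)))^2 \<le> QQ z (Suc m) * (R0 * R0)"
    unfolding eq by (rule mult_left_mono) (rule QQ_nonneg[OF z])
  also have "\<dots> \<le> ((mu^2)^m * (2 * R0 / c)^2) * (R0 * R0)"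
    by (rule mult_right_mono[OF QQ_bound[OF z]]) simp
  also have "\<dots> = (R0 * (2 * R0 / c) * mu^m)^2"
  proof -
    have "(mu^2)^m = (mu^m)^2" by (simp add: power_mult[symmetric] mult.commute)
    thus ?thesis by (simp add: power2_eq_square algebra_simps)
  qed
  finally show ?thesis
    by (rule power2_le_imp_le) (use mu_pos cpos R0_pos in simp)
qed

definition "Kc = ln 2 + R0 * (2 * R0 / c) / c / (1 - mu)"

lemma ln_pq_sum: assumes z: "\<bar>Im z\<bar> < \<delta>"
  shows "\<bar>(\<Sum>j<n. ln (cmod (qq z j))) - (\<Sum>j<n. ln (cmod (pp z j)))\<bar> \<le> Kc"
proof -
  define f where "f j = \<bar>ln (cmod (qq z j)) - ln (cmod (pp z j))\<bar>" for j
  have f0: "f 0 = ln 2" unfolding f_def pp_def qq_def using sig by (auto simp: norm_mult)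
  have fS: "f (Suc m) \<le> (R0 * (2 * R0 / c) / c) * mu^m" for m
  proof -
    have "f (Suc m) \<le> \<bar>cmod (qq z (Suc m)) - cmod (pp z (Suc m))\<bar> / c"
      unfolding f_def by (rule ln_diff_le[OF cpos qq_bounds(2)[OF z] pp_bounds(2)[OF z]]) simp_all
    also have "\<dots> \<le> cmod (pp z (Suc m) - qq z (Suc m)) / c"
      using cpos by (intro divide_right_mono) (auto simp: norm_minus_commute[of "pp z (Suc m)"] intro: norm_triangle_ineq3[THEN order_trans])
    also have "\<dots> \<le> R0 * (2 * R0 / c) * mu^m / c"
      by (rule divide_right_mono[OF pq_diff[OF z]]) (use cpos in simp)
    also have "\<dots> = (R0 * (2 * R0 / c) / c) * mu^m" by simp
    finally show ?thesis .
  qed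
  have geo: "(\<Sum>j<m. mu^j) \<le> 1 / (1 - mu)" for m
  proof -
    have "(\<Sum>j<m. mu^j) = (1 - mu^m) / (1 - mu)" using mu_lt1 by (simp add: sum_gp_strict)
    also have "\<dots> \<le> 1 / (1 - mu)" using mu_lt1 mu_pos by (intro divide_right_mono) auto
    finally show ?thesis .
  qed
  have C0: "0 \<le> R0 * (2 * R0 / c) / c" using cpos Bnn unfolding R0_def by simp
  have "\<bar>(\<Sum>j<n. ln (cmod (qq z j))) - (\<Sum>j<n. ln (cmod (pp z j)))\<bar> \<le> (\<Sum>j<n. f j)"
    unfolding f_def sum_subtractf[symmetric] by (rule sum_abs)
  also have "\<dots> \<le> Kc"
  proof (cases n)
    case 0 thus ?thesis unfolding Kc_def using C0 mu_lt1 by simp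
  next
    case (Suc m)
    have "(\<Sum>j<n. f j) = f 0 + (\<Sum>j<m. f (Suc j))" unfolding Suc by (rule sum.lessThan_Suc_shift)
    also have "(\<Sum>j<m. f (Suc j)) \<le> (\<Sum>j<m. (R0 * (2 * R0 / c) / c) * mu^j)" by (rule sum_mono[OF fS])
    also have "\<dots> = (R0 * (2 * R0 / c) / c) * (\<Sum>j<m. mu^j)" by (simp add: sum_distrib_left)
    also have "\<dots> \<le> (R0 * (2 * R0 / c) / c) * (1 / (1 - mu))" by (rule mult_left_mono[OF geo C0])
    finally show ?thesis unfolding Kc_def f0 by simp
  qed
  finally show ?thesis .
qed

end

context hyp begin

definition "R1 = max R0 2"
definition "L1 = ln (sqrt (R1^2 + 1))"
definition "Kup = ln (6 * (1 + exp (Kc + L1))) + L1"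

lemma pp_le_R1: "\<bar>Im z\<bar> < \<delta> \<Longrightarrow> cmod (pp z n) \<le> R1"
proof (cases n)
  case 0 thus ?thesis using sig by (auto simp: pp_def R1_def norm_mult)
next
  case (Suc m)
  assume z: "\<bar>Im z\<bar> < \<delta>"
  thus ?thesis using pp_bounds(3)[OF z, of n] Suc by (simp add: R1_def)
qed

lemma qq_le_R1: "\<bar>Im z\<bar> < \<delta> \<Longrightarrow> cmod (qq z n) \<le> R1"
proof (cases n)
  case 0 thus ?thesis using sig by (auto simp: qq_def R1_def norm_mult)
next
  case (Suc m)
  assume z: "\<bar>Im z\<bar> < \<delta>"
  thus ?thesis using qq_bounds(3)[OF z, of n] Suc by (simp add: R1_def)
qed

lemma tail_bounds: "0 \<le> ln (sqrt (r^2 + 1))" "0 \<le> r \<Longrightarrow> r \<le> R1 \<Longrightarrow> ln (sqrt (r^2 + 1)) \<le> L1"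
proof -
  show "0 \<le> ln (sqrt (r^2 + 1))" by simp
  assume r: "0 \<le> r" "r \<le> R1"
  hence "r^2 \<le> R1^2" by (simp add: power_mono)
  thus "ln (sqrt (r^2 + 1)) \<le> L1" unfolding L1_def by (subst ln_le_cancel_iff) (simp_all add: add_nonneg_pos)
qed

lemma pp_nz: "\<bar>Im z\<bar> < \<delta> \<Longrightarrow> pp z j \<noteq> 0"
  unfolding pp_def by (rule it_nz[OF _ wp(1)])
lemma qq_nz: "\<bar>Im z\<bar> < \<delta> \<Longrightarrow> qq z j \<noteq> 0"
  unfolding qq_def by (rule it_nz[OF _ wq(1)])

lemma norm_X:
  assumes z: "\<bar>Im z\<bar> < \<delta>" and w: "0 < \<sigma> * Im w"
  shows "ln (norm (Mn v \<alpha> n E z *v vector [w, 1])) =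
           (\<Sum>j<n. ln (cmod (itr E w z j))) + ln (sqrt ((cmod (itr E w z n))^2 + 1))"
proof -
  have nz: "\<And>j. itr E w z j \<noteq> 0" by (rule it_nz[OF z w])
  define P where "P = (\<Prod>j<n. itr E w z j)"
  have Pnz: "P \<noteq> 0" unfolding P_def using nz by simp
  have "norm (Mn v \<alpha> n E z *v vector [w, 1]) = sqrt ((cmod (P * itr E w z n))^2 + (cmod P)^2)"
    unfolding norm_c2 Mn_itr[OF nz] P_def ..
  also have "\<dots> = sqrt ((cmod P)^2 * ((cmod (itr E w z n))^2 + 1))"
    by (simp add: norm_mult power_mult_distrib algebra_simps)
  also have "\<dots> = cmod P * sqrt ((cmod (itr E w z n))^2 + 1)"
    by (simp only: real_sqrt_mult real_sqrt_abs abs_norm_cancel)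
  finally have eq: "norm (Mn v \<alpha> n E z *v vector [w, 1]) = cmod P * sqrt ((cmod (itr E w z n))^2 + 1)" .
  have "ln (cmod P) = (\<Sum>j<n. ln (cmod (itr E w z j)))"
    unfolding P_def prod_norm[symmetric] using nz by (subst ln_prod) auto
  moreover have "0 < cmod P" using Pnz by simp
  moreover have "0 < sqrt ((cmod (itr E w z n))^2 + 1)" by (simp add: add_nonneg_pos)
  ultimately show ?thesis unfolding eq by (simp add: ln_mult)
qed

definition "SP z n = (\<Sum>j<n. ln (cmod (pp z j)))"
definition "SQ z n = (\<Sum>j<n. ln (cmod (qq z j)))"

lemma lnXP: assumes z: "\<bar>Im z\<bar> < \<delta>"
  shows "SP z n \<le> ln (norm (Mn v \<alpha> n E z *v vector [of_real \<sigma> * \<i>, 1]))"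
    and "ln (norm (Mn v \<alpha> n E z *v vector [of_real \<sigma> * \<i>, 1])) \<le> SP z n + L1"
  using norm_X[OF z wp(1), of n] tail_bounds[of "cmod (pp z n)"] pp_le_R1[OF z, of n]
  unfolding SP_def pp_def by auto

lemma lnXQ: assumes z: "\<bar>Im z\<bar> < \<delta>"
  shows "ln (norm (Mn v \<alpha> n E z *v vector [of_real (2*\<sigma>) * \<i>, 1])) \<le> SQ z n + L1"
  using norm_X[OF z wq(1), of n] tail_bounds[of "cmod (qq z n)"] qq_le_R1[OF z, of n]
  unfolding SQ_def qq_def by auto

lemma normX_pos: assumes z: "\<bar>Im z\<bar> < \<delta>" and w: "0 < \<sigma> * Im w"
  shows "0 < norm (Mn v \<alpha> n E z *v vector [w, 1])"
proof -
  have "(Mn v \<alpha> n E z *v vector [w, 1])$2 \<noteq> 0"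
    using Mn_itr(2)[OF it_nz[OF z w]] it_nz[OF z w] by simp
  hence "Mn v \<alpha> n E z *v vector [w, 1] \<noteq> 0" by auto
  thus ?thesis by simp
qed

lemma lnM_lower: assumes z: "\<bar>Im z\<bar> < \<delta>" shows "SP z n - ln (sqrt 2) \<le> lnM n E z"
proof -
  let ?X = "Mn v \<alpha> n E z *v vector [of_real \<sigma> * \<i>, 1]"
  have np: "norm (vector [of_real \<sigma> * \<i>, 1] :: complex^2) = sqrt 2"
    unfolding norm_c2 using sig by (auto simp: norm_mult)
  have le: "norm ?X \<le> mat_opnorm (Mn v \<alpha> n E z) * sqrt 2" using opnorm_ge[of _ "vector [of_real \<sigma> * \<i>, 1]"] np by metis
  have pos: "0 < mat_opnorm (Mn v \<alpha> n E z) * sqrt 2"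
    using opnorm_Mn_ge1[of n E z] by (intro mult_pos_pos) auto
  have "ln (norm ?X) \<le> ln (mat_opnorm (Mn v \<alpha> n E z) * sqrt 2)"
    using le by (subst ln_le_cancel_iff[OF normX_pos[OF z wp(1)] pos])
  also have "\<dots> = lnM n E z + ln (sqrt 2)" unfolding lnM_def using opnorm_Mn_ge1[of n E z]
    by (simp add: ln_mult)
  finally show ?thesis using lnXP(1)[OF z, of n] by linarith
qed

lemma lnM_upper: assumes z: "\<bar>Im z\<bar> < \<delta>" shows "lnM n E z \<le> SP z n + Kup"
proof -
  let ?XP = "Mn v \<alpha> n E z *v vector [of_real \<sigma> * \<i>, 1]"
  let ?XQ = "Mn v \<alpha> n E z *v vector [of_real (2*\<sigma>) * \<i>, 1]"
  have pP: "0 < norm ?XP" by (rule normX_pos[OF z wp(1)])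
  have pQ: "0 < norm ?XQ" by (rule normX_pos[OF z wq(1)])
  have "\<bar>SQ z n - SP z n\<bar> \<le> Kc" unfolding SQ_def SP_def by (rule ln_pq_sum[OF z])
  hence "ln (norm ?XQ) \<le> ln (norm ?XP) + (Kc + L1)" using lnXQ[OF z, of n] lnXP(1)[OF z, of n] by linarith
  hence "exp (ln (norm ?XQ)) \<le> exp (ln (norm ?XP) + (Kc + L1))" by simp
  hence Q: "norm ?XQ \<le> norm ?XP * exp (Kc + L1)" using pP pQ by (simp add: exp_add)
  have "mat_opnorm (Mn v \<alpha> n E z) \<le> norm (Mn v \<alpha> n E z)" by (rule opnorm_le_norm)
  also have "\<dots> \<le> 6 * (norm ?XP + norm ?XQ)" by (rule norm_via_cone[OF abs_sig])
  also have "\<dots> \<le> 6 * (norm ?XP + norm ?XP * exp (Kc + L1))" using Q by simp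
  also have "\<dots> = (6 * (1 + exp (Kc + L1))) * norm ?XP" by (simp add: algebra_simps)
  finally have o: "mat_opnorm (Mn v \<alpha> n E z) \<le> (6 * (1 + exp (Kc + L1))) * norm ?XP" .
  have c6: "0 < 6 * (1 + exp (Kc + L1))" by (simp add: add_pos_pos)
  have "lnM n E z \<le> ln ((6 * (1 + exp (Kc + L1))) * norm ?XP)"
    unfolding lnM_def using o opnorm_Mn_ge1[of n E z] c6 pP by (subst ln_le_cancel_iff) auto
  also have "\<dots> = ln (6 * (1 + exp (Kc + L1))) + ln (norm ?XP)" using c6 pP by (simp add: ln_mult)
  also have "\<dots> \<le> ln (6 * (1 + exp (Kc + L1))) + (SP z n + L1)" using lnXP(2)[OF z, of n] by simp
  finally show ?thesis unfolding Kup_def by simp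
qed

end

context hyp begin

lemma Complex_in_strip_d: "\<bar>y\<bar> < \<delta> \<Longrightarrow> \<bar>Im (Complex x y)\<bar> < \<delta>" by simp

lemma lnpp_cont: assumes y: "\<bar>y\<bar> < \<delta>" shows "continuous_on UNIV (\<lambda>x. ln (cmod (pp (Complex x y) j)))"
proof (rule continuous_on_ln)
  have "continuous_on (strip \<delta>) (\<lambda>z. pp z j)"
    unfolding pp_def by (rule holomorphic_on_imp_continuous_on[OF it_hol[OF wp(1)]])
  hence "continuous_on UNIV (\<lambda>x. pp (Complex x y) j)"
    by (rule continuous_on_compose2[OF _ continuous_on_Complex_x]) (auto simp: y)
  thus "continuous_on UNIV (\<lambda>x. cmod (pp (Complex x y) j))" by (intro continuous_intros)
  show "\<forall>x\<in>UNIV. cmod (pp (Complex x y) j) \<noteq> 0" using pp_nz y by simp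
qed

lemma lnpp_int: "\<bar>y\<bar> < \<delta> \<Longrightarrow> (\<lambda>x. ln (cmod (pp (Complex x y) j))) integrable_on {a..b}"
  by (rule integrable_continuous_interval, rule continuous_on_subset[OF lnpp_cont]) auto

lemma SP_int: "\<bar>y\<bar> < \<delta> \<Longrightarrow> (\<lambda>x. SP (Complex x y) n) integrable_on {a..b}"
  unfolding SP_def by (rule integrable_sum) (auto intro: lnpp_int)

lemma SP_integral: "\<bar>y\<bar> < \<delta> \<Longrightarrow> integral {0..2*pi} (\<lambda>x. SP (Complex x y) n) =
   (\<Sum>j<n. integral {0..2*pi} (\<lambda>x. ln (cmod (pp (Complex x y) j))))"
  unfolding SP_def by (rule integral_sum) (auto intro: lnpp_int)

lemma SP_integral_const: "\<bar>y\<bar> < \<delta> \<Longrightarrow> integral {0..2*pi} (\<lambda>x. SP (Complex x y) n) = integral {0..2*pi} (\<lambda>x. SP (Complex x 0) n)"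
proof -
  assume y: "\<bar>y\<bar> < \<delta>"
  have y0: "\<bar>0::real\<bar> < \<delta>" using dpos by simp
  have "\<And>j. integral {0..2*pi} (\<lambda>x. ln (cmod (pp (Complex x y) j))) = integral {0..2*pi} (\<lambda>x. ln (cmod (pp (Complex x 0) j)))"
    unfolding pp_def by (rule lnit_const[OF wp(1) y y0])
  thus ?thesis using SP_integral[OF y] SP_integral[OF y0] by simp
qed

lemma yh: "\<bar>y\<bar> < \<delta> \<Longrightarrow> \<bar>y\<bar> < h" using dh by simp

lemma Aint_SP: assumes y: "\<bar>y\<bar> < \<delta>"
  shows "Aint E y n \<le> integral {0..2*pi} (\<lambda>x. SP (Complex x y) n) + 2*pi * Kup"
    and "integral {0..2*pi} (\<lambda>x. SP (Complex x y) n) - 2*pi * ln (sqrt 2) \<le> Aint E y n"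
proof -
  have i1: "(\<lambda>x. SP (Complex x y) n + Kup) integrable_on {0..2*pi}"
    by (intro integrable_add SP_int[OF y] integrable_const_ivl)
  have "Aint E y n \<le> integral {0..2*pi} (\<lambda>x. SP (Complex x y) n + Kup)"
    unfolding Aint_def by (rule integral_le[OF lnM_int[OF yh[OF y]] i1]) (rule lnM_upper, simp add: y)
  also have "\<dots> = integral {0..2*pi} (\<lambda>x. SP (Complex x y) n) + 2*pi * Kup"
    by (simp add: integral_add[OF SP_int[OF y] integrable_const_ivl])
  finally show "Aint E y n \<le> integral {0..2*pi} (\<lambda>x. SP (Complex x y) n) + 2*pi * Kup" .
  have i2: "(\<lambda>x. SP (Complex x y) n - ln (sqrt 2)) integrable_on {0..2*pi}"
    by (intro integrable_diff SP_int[OF y] integrable_const_ivl)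
  have "integral {0..2*pi} (\<lambda>x. SP (Complex x y) n) - 2*pi * ln (sqrt 2) = integral {0..2*pi} (\<lambda>x. SP (Complex x y) n - ln (sqrt 2))"
    by (simp add: integral_diff[OF SP_int[OF y] integrable_const_ivl])
  also have "\<dots> \<le> Aint E y n"
    unfolding Aint_def by (rule integral_le[OF i2 lnM_int[OF yh[OF y]]]) (rule lnM_lower, simp add: y)
  finally show "integral {0..2*pi} (\<lambda>x. SP (Complex x y) n) - 2*pi * ln (sqrt 2) \<le> Aint E y n" .
qed

lemma Aint_close: assumes y: "\<bar>y\<bar> < \<delta>" shows "\<bar>Aint E y n - Aint E 0 n\<bar> \<le> 2*pi * (Kup + ln (sqrt 2))"
proof -
  have y0: "\<bar>0::real\<bar> < \<delta>" using dpos by simp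
  show ?thesis using Aint_SP[OF y, of n] Aint_SP[OF y0, of n] SP_integral_const[OF y, of n]
    by (simp add: algebra_simps abs_le_iff)
qed

lemma Lyap_const: assumes y: "\<bar>y\<bar> < \<delta>" shows "Lyap v \<alpha> E y = Lyap v \<alpha> E 0"
proof -
  have y0: "\<bar>0::real\<bar> < h" using hpos by simp
  have d: "(\<lambda>n. (Aint E y n - Aint E 0 n) / real n) \<longlonglongrightarrow> 0"
  proof (rule Lim_null_comparison[OF _ tendsto_divide_0[OF tendsto_const filterlim_at_top_imp_at_infinity[OF filterlim_real_sequentially]]])
    show "\<forall>\<^sub>F n in sequentially. norm ((Aint E y n - Aint E 0 n) / real n) \<le> 2*pi * (Kup + ln (sqrt 2)) / real n"
      using Aint_close[OF y] by (auto simp: divide_right_mono abs_divide intro!: always_eventually)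
  qed
  have "(\<lambda>n. Aint E y n / real n - Aint E 0 n / real n) \<longlonglongrightarrow> 2*pi * Lyap v \<alpha> E y - 2*pi * Lyap v \<alpha> E 0"
    by (intro tendsto_diff Lyap_tendsto yh y y0)
  moreover have "(\<lambda>n. Aint E y n / real n - Aint E 0 n / real n) \<longlonglongrightarrow> 0"
    using d by (simp add: diff_divide_distrib)
  ultimately have "2*pi * Lyap v \<alpha> E y - 2*pi * Lyap v \<alpha> E 0 = 0" by (rule LIMSEQ_unique)
  thus ?thesis by simp
qed

end

lemma Im_mult_cnj_self: "Im (e * (u * cnj u)) = Im e * (cmod u)^2"
  by (simp add: complex_mult_cnj cmod_power2)

lemma Im_lin: "Im (e * complex_of_real a - w) = Im e * a - Im w"
  by simp

lemma JJ_alg: "Im (e * (x * cnj x) - y * cnj x) = Im e * (cmod x)^2 + Im (x * cnj y)"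
proof -
  have xx: "x * cnj x = of_real ((cmod x)^2)" by (rule complex_norm_square[symmetric])
  show ?thesis unfolding xx by simp
qed

lemma Im_swap: "Im (b * cnj a) = - Im (a * cnj b)"
  by simp

lemma Im_le_prod: "\<bar>Im (a * cnj b)\<bar> \<le> cmod a * cmod b"
  using abs_Im_le_cmod[of "a * cnj b"] by (simp add: norm_mult)

context hyp begin

definition "XX z k = Mn v \<alpha> k E z *v vector [of_real \<sigma> * \<i>, 1]"
definition "JJ z k = \<sigma> * Im (XX z k $ 1 * cnj (XX z k $ 2))"
definition "aa z k = (cmod (XX z k $ 1))^2"
definition "TT z n = (\<Sum>k<n. aa z k)"

lemma XX_Suc: "XX z (Suc k) $ 1 = (E - v (z + of_real (real (Suc k) * \<alpha>))) * XX z k $ 1 - XX z k $ 2"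
   "XX z (Suc k) $ 2 = XX z k $ 1"
proof -
  have eq: "XX z (Suc k) = Smat v E (z + of_real (real (Suc k) * \<alpha>)) *v XX z k"
    unfolding XX_def by (simp only: Mn.simps matrix_vector_mul_assoc)
  show "XX z (Suc k) $ 1 = (E - v (z + of_real (real (Suc k) * \<alpha>))) * XX z k $ 1 - XX z k $ 2"
    unfolding eq Smat_mv by simp
  show "XX z (Suc k) $ 2 = XX z k $ 1" unfolding eq Smat_mv by simp
qed

lemma JJ_0: "JJ z 0 = 1"
  unfolding JJ_def XX_def using sig by (auto simp: matrix_vector_mul_lid)

lemma JJ_Suc: assumes z: "\<bar>Im z\<bar> < \<delta>" shows "JJ z k + c * aa z k \<le> JJ z (Suc k)"
proof -
  let ?e = "E - v (z + of_real (real (Suc k) * \<alpha>))"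
  let ?x = "XX z k $ 1" and ?y = "XX z k $ 2"
  have ce: "c \<le> \<sigma> * Im ?e" by (rule cone) (simp add: z)
  have "JJ z (Suc k) = \<sigma> * Im ((?e * ?x - ?y) * cnj ?x)" unfolding JJ_def XX_Suc ..
  also have "(?e * ?x - ?y) * cnj ?x = ?e * (?x * cnj ?x) - ?y * cnj ?x" by (simp add: algebra_simps)
  also have "\<sigma> * Im (?e * (?x * cnj ?x) - ?y * cnj ?x) = (\<sigma> * Im ?e) * aa z k + JJ z k"
    unfolding JJ_alg JJ_def aa_def by (simp only: distrib_left mult.assoc)
  finally have "JJ z (Suc k) = (\<sigma> * Im ?e) * aa z k + JJ z k" .
  moreover have "c * aa z k \<le> (\<sigma> * Im ?e) * aa z k" using ce by (rule mult_right_mono) (simp add: aa_def)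
  ultimately show ?thesis by simp
qed

lemma JJ_lower: assumes z: "\<bar>Im z\<bar> < \<delta>" shows "1 + c * TT z n \<le> JJ z n"
proof (induction n)
  case 0 then show ?case by (simp add: JJ_0 TT_def)
next
  case (Suc n)
  show ?case using Suc JJ_Suc[OF z, of n] by (simp add: TT_def algebra_simps)
qed

lemma norm_XX_sq: "(norm (XX z n))^2 = aa z n + (cmod (XX z n $ 2))^2"
  unfolding aa_def norm_c2 by simp

lemma norm_XX_J: assumes z: "\<bar>Im z\<bar> < \<delta>" shows "2 * JJ z n \<le> (norm (XX z n))^2"
proof -
  have "JJ z n \<le> cmod (XX z n $ 1) * cmod (XX z n $ 2)"
    unfolding JJ_def using Im_le_prod[of "XX z n $ 1" "XX z n $ 2"] sig by auto
  moreover have "2 * (cmod (XX z n $ 1) * cmod (XX z n $ 2)) \<le> aa z n + (cmod (XX z n $ 2))^2"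
    unfolding aa_def using zero_le_power2[of "cmod (XX z n $ 1) - cmod (XX z n $ 2)"]
    by (simp add: power2_eq_square algebra_simps)
  ultimately show ?thesis unfolding norm_XX_sq by linarith
qed

lemma aa_nonneg: "0 \<le> aa z k" by (simp add: aa_def)

lemma TT_step: assumes z: "\<bar>Im z\<bar> < \<delta>" shows "(1 + 2*c) * TT z (Suc m) \<le> TT z (Suc (Suc (Suc m)))"
proof -
  have n2: "(norm (XX z (Suc (Suc m))))^2 = aa z (Suc (Suc m)) + aa z (Suc m)"
    unfolding norm_XX_sq XX_Suc aa_def ..
  have key: "2 * (1 + c * TT z (Suc (Suc m))) \<le> aa z (Suc (Suc m)) + aa z (Suc m)"
  proof -
    have "2 * (1 + c * TT z (Suc (Suc m))) \<le> 2 * JJ z (Suc (Suc m))" using JJ_lower[OF z, of "Suc (Suc m)"] by simp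
    also have "\<dots> \<le> (norm (XX z (Suc (Suc m))))^2" by (rule norm_XX_J[OF z])
    finally show ?thesis unfolding n2 .
  qed
  have t2: "TT z (Suc (Suc m)) = TT z (Suc m) + aa z (Suc m)" unfolding TT_def by simp
  have t3: "TT z (Suc (Suc (Suc m))) = TT z (Suc m) + aa z (Suc m) + aa z (Suc (Suc m))" unfolding TT_def by simp
  have "c * TT z (Suc m) \<le> c * TT z (Suc (Suc m))" unfolding t2 using cpos aa_nonneg[of z "Suc m"] by simp
  thus ?thesis using key t3 by (simp add: algebra_simps)
qed

end

context hyp begin

lemma aa_0: "aa z 0 = 1"
  unfolding aa_def XX_def using sig by (auto simp: matrix_vector_mul_lid norm_mult)

lemma TT_lower_aux: assumes z: "\<bar>Im z\<bar> < \<delta>"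
  shows "(1 + 2*c)^(m div 2) \<le> TT z (Suc m) \<and> (1 + 2*c)^(Suc m div 2) \<le> TT z (Suc (Suc m))"
proof (induction m)
  case 0
  have "TT z (Suc 0) = 1" unfolding TT_def by (simp add: aa_0)
  moreover have "TT z (Suc (Suc 0)) = 1 + aa z 1" unfolding TT_def by (simp add: aa_0)
  ultimately show ?case using aa_nonneg[of z 1] by simp
next
  case (Suc m)
  have "(1 + 2*c)^(Suc (Suc m) div 2) = (1 + 2*c) * (1 + 2*c)^(m div 2)" by simp
  also have "\<dots> \<le> (1 + 2*c) * TT z (Suc m)" using Suc cpos by (intro mult_left_mono) auto
  also have "\<dots> \<le> TT z (Suc (Suc (Suc m)))" by (rule TT_step[OF z])
  finally show ?case using Suc by simp
qed

lemma normXX_lower: assumes z: "\<bar>Im z\<bar> < \<delta>"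
  shows "2 * c * (1 + 2*c)^(m div 2) \<le> (norm (XX z (Suc m)))^2"
proof -
  have "2 * c * (1 + 2*c)^(m div 2) \<le> 2 * c * TT z (Suc m)"
    using TT_lower_aux[OF z, of m] cpos by simp
  also have "\<dots> \<le> 2 * (1 + c * TT z (Suc m))" by simp
  also have "\<dots> \<le> 2 * JJ z (Suc m)" using JJ_lower[OF z, of "Suc m"] by simp
  also have "\<dots> \<le> (norm (XX z (Suc m)))^2" by (rule norm_XX_J[OF z])
  finally show ?thesis .
qed

lemma lnM_XX: assumes z: "\<bar>Im z\<bar> < \<delta>" shows "ln (norm (XX z n)) - ln (sqrt 2) \<le> lnM n E z"
proof -
  let ?X = "XX z n"
  have np: "norm (vector [of_real \<sigma> * \<i>, 1] :: complex^2) = sqrt 2"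
    unfolding norm_c2 using sig by (auto simp: norm_mult)
  have le: "norm ?X \<le> mat_opnorm (Mn v \<alpha> n E z) * sqrt 2"
    unfolding XX_def using opnorm_ge[of _ "vector [of_real \<sigma> * \<i>, 1]"] np by metis
  have pos: "0 < mat_opnorm (Mn v \<alpha> n E z) * sqrt 2"
    using opnorm_Mn_ge1[of n E z] by (intro mult_pos_pos) auto
  have Xpos: "0 < norm ?X" unfolding XX_def by (rule normX_pos[OF z wp(1)])
  have "ln (norm ?X) \<le> ln (mat_opnorm (Mn v \<alpha> n E z) * sqrt 2)"
    using le by (subst ln_le_cancel_iff[OF Xpos pos])
  also have "\<dots> = lnM n E z + ln (sqrt 2)" unfolding lnM_def using opnorm_Mn_ge1[of n E z]
    by (simp add: ln_mult)
  finally show ?thesis by linarith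
qed

definition "K6 = ln (2 * c) / 2 - ln (1 + 2*c) / 2 - ln (sqrt 2)"

lemma lnM_growth: assumes z: "\<bar>Im z\<bar> < \<delta>" and n: "1 \<le> n"
  shows "real n / 4 * ln (1 + 2*c) + K6 \<le> lnM n E z"
proof -
  obtain m where m: "n = Suc m" using n by (cases n) auto
  have c2: "0 < 2 * c" "0 < 1 + 2*c" using cpos by auto
  have pw: "0 < (1 + 2*c)^(m div 2)" using c2 by simp
  have Xpos: "0 < norm (XX z (Suc m))" unfolding XX_def by (rule normX_pos[OF z wp(1)])
  have "ln (2 * c * (1 + 2*c)^(m div 2)) \<le> ln ((norm (XX z (Suc m)))^2)"
    using normXX_lower[OF z, of m] c2 pw Xpos by (subst ln_le_cancel_iff) auto
  hence "ln (2 * c) + real (m div 2) * ln (1 + 2*c) \<le> 2 * ln (norm (XX z (Suc m)))"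
    using c2 pw Xpos by (simp add: ln_mult ln_realpow)
  moreover have "real m - 1 \<le> 2 * real (m div 2)" by linarith
  moreover have "0 < ln (1 + 2*c)" using cpos by simp
  ultimately have "ln (2 * c) + (real m - 1) / 2 * ln (1 + 2*c) \<le> 2 * ln (norm (XX z (Suc m)))"
  proof -
    assume a: "ln (2 * c) + real (m div 2) * ln (1 + 2*c) \<le> 2 * ln (norm (XX z (Suc m)))"
      and b: "real m - 1 \<le> 2 * real (m div 2)" and l: "0 < ln (1 + 2*c)"
    have "(real m - 1) / 2 * ln (1 + 2*c) \<le> real (m div 2) * ln (1 + 2*c)"
      using b l by (intro mult_right_mono) auto
    thus ?thesis using a by linarith
  qed
  hence "real n / 4 * ln (1 + 2*c) + K6 \<le> ln (norm (XX z n)) - ln (sqrt 2)"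
    unfolding m K6_def by (simp add: field_simps)
  also have "\<dots> \<le> lnM n E z" by (rule lnM_XX[OF z])
  finally show ?thesis .
qed

lemma Lyap_pos: "0 < Lyap v \<alpha> E 0"
proof -
  have y0: "\<bar>0::real\<bar> < h" using hpos by simp
  have low: "2*pi * (ln (1 + 2*c) / 4 + K6 / real n) \<le> Aint E 0 n / real n" if n: "1 \<le> n" for n
  proof -
    have "integral {0..2*pi} (\<lambda>x. real n / 4 * ln (1 + 2*c) + K6) \<le> Aint E 0 n"
      unfolding Aint_def
      by (rule integral_le[OF integrable_const_ivl lnM_int[OF y0]]) (rule lnM_growth[OF _ n], simp add: dpos)
    hence "2*pi * (real n / 4 * ln (1 + 2*c) + K6) \<le> Aint E 0 n" by simp
    hence "2*pi * (real n / 4 * ln (1 + 2*c) + K6) / real n \<le> Aint E 0 n / real n"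
      using n by (intro divide_right_mono) auto
    thus ?thesis using n by (simp add: field_simps)
  qed
  have t: "(\<lambda>n. 2*pi * (ln (1 + 2*c) / 4 + K6 / real n)) \<longlonglongrightarrow> 2*pi * (ln (1 + 2*c) / 4 + 0)"
    by (intro tendsto_mult tendsto_add tendsto_const tendsto_divide_0[OF tendsto_const filterlim_at_top_imp_at_infinity[OF filterlim_real_sequentially]])
  have "2*pi * (ln (1 + 2*c) / 4 + 0) \<le> 2*pi * Lyap v \<alpha> E 0"
    by (rule LIMSEQ_le[OF t Lyap_tendsto[OF y0]]) (use low in \<open>auto intro!: exI[of _ 1]\<close>)
  moreover have "0 < ln (1 + 2*c)" using cpos by simp
  ultimately show ?thesis by (simp add: zero_less_mult_iff)
qed

end

context lsetting begin

lemma nonreal_hyp: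
  assumes E: "E \<notin> \<real>"
  shows "\<exists>\<delta>>0. (\<forall>y. \<bar>y\<bar> < \<delta> \<longrightarrow> Lyap v \<alpha> E y = Lyap v \<alpha> E 0) \<and> 0 < Lyap v \<alpha> E 0"
proof -
  have imE: "Im E \<noteq> 0" using E by (simp add: complex_is_Real_iff)
  define \<sigma> where "\<sigma> = (if 0 < Im E then 1 else (-1::real))"
  define c where "c = \<bar>Im E\<bar> / 2"
  have cpos: "0 < c" using imE by (simp add: c_def)
  have sE: "\<sigma> * Im E = 2 * c" using imE by (auto simp: \<sigma>_def c_def)
  obtain \<delta> where d: "\<delta> > 0" "\<delta> < h" and dv: "\<And>z. \<bar>Im z\<bar> < \<delta> \<Longrightarrow> \<bar>Im (v z)\<bar> < c"
    using small_Im_v[OF cpos] by blast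
  obtain B where B: "0 \<le> B" "\<And>z. z \<in> strip h \<Longrightarrow> cmod (v z) \<le> B" using v_bound by blast
  interpret H: hyp v \<alpha> h E \<sigma> c \<delta> B
  proof
    show "\<sigma> = 1 \<or> \<sigma> = -1" by (simp add: \<sigma>_def)
    show "0 < c" by (rule cpos)
    show "0 < \<delta>" by (rule d(1))
    show "\<delta> \<le> h" using d(2) by simp
    show "0 \<le> B" by (rule B(1))
    show "\<And>z. z \<in> strip h \<Longrightarrow> cmod (v z) \<le> B" by (rule B(2))
    fix z assume z: "\<bar>Im z\<bar> < \<delta>"
    have "\<sigma> * Im (v z) \<le> \<bar>Im (v z)\<bar>" by (auto simp: \<sigma>_def)
    hence "\<sigma> * Im (v z) < c" using dv[OF z] by linarith
    thus "c \<le> \<sigma> * Im (E - v z)" using sE by (simp add: algebra_simps)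
  qed
  show ?thesis using H.Lyap_const H.Lyap_pos d(1) by blast
qed

end

theorem lemma5p2:
  fixes v :: "complex \<Rightarrow> complex" and \<alpha> h :: real
  assumes irr: "\<And>k::int. k \<noteq> 0 \<Longrightarrow> (\<nexists>m::int. real_of_int k * \<alpha> = 2 * pi * real_of_int m)"
    and hpos: "0 < h"
    and hol: "v holomorphic_on strip h"
    and per: "\<And>z. z \<in> strip h \<Longrightarrow> v (z + of_real (2 * pi)) = v z"
    and bdd: "bounded (v ` strip h)"
    and realv: "\<And>x::real. v (of_real x) \<in> \<real>"
  shows "(\<forall>E. E \<notin> \<real> \<longrightarrow>
            ((\<lambda>\<epsilon>. (Lyap v \<alpha> E \<epsilon> - Lyap v \<alpha> E 0) / \<epsilon>) \<longlongrightarrow> 0) (at_right 0) \<and>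
            ((\<lambda>\<epsilon>. (Lyap v \<alpha> E \<epsilon> - Lyap v \<alpha> E 0) / \<epsilon>) \<longlongrightarrow> 0) (at_left 0))
       \<and> (\<forall>y. \<bar>y\<bar> < h \<longrightarrow> {E. Lyap v \<alpha> E y = 0} \<subseteq> \<real>)"
proof -
  interpret L: lsetting v \<alpha> h
  proof
    show "0 < h" by (rule hpos)
    show "v holomorphic_on strip h" by (rule hol)
    show "\<And>z. z \<in> strip h \<Longrightarrow> v (z + of_real (2 * pi)) = v z" by (rule per)
    show "bounded (v ` strip h)" by (rule bdd)
    show "\<And>x. v (of_real x) \<in> \<real>" by (rule realv)
  qed
  have part1: "((\<lambda>\<epsilon>. (Lyap v \<alpha> E \<epsilon> - Lyap v \<alpha> E 0) / \<epsilon>) \<longlongrightarrow> 0) (at_right 0) \<and>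
            ((\<lambda>\<epsilon>. (Lyap v \<alpha> E \<epsilon> - Lyap v \<alpha> E 0) / \<epsilon>) \<longlongrightarrow> 0) (at_left 0)" if E: "E \<notin> \<real>" for E
  proof -
    obtain \<delta> where d: "\<delta> > 0" and c: "\<And>y. \<bar>y\<bar> < \<delta> \<Longrightarrow> Lyap v \<alpha> E y = Lyap v \<alpha> E 0"
      using L.nonreal_hyp[OF E] by blast
    have q: "(Lyap v \<alpha> E \<epsilon> - Lyap v \<alpha> E 0) / \<epsilon> = 0" if "\<bar>\<epsilon>\<bar> < \<delta>" for \<epsilon>
    proof -
      have "Lyap v \<alpha> E \<epsilon> = Lyap v \<alpha> E 0" by (rule c[OF that])
      thus ?thesis by simp
    qed
    have r: "eventually (\<lambda>\<epsilon>. (Lyap v \<alpha> E \<epsilon> - Lyap v \<alpha> E 0) / \<epsilon> = 0) (at_right 0)"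
    proof (rule eventually_at_rightI[of 0 \<delta>])
      fix x :: real assume "x \<in> {0<..<\<delta>}"
      hence "\<bar>x\<bar> < \<delta>" by simp
      thus "(Lyap v \<alpha> E x - Lyap v \<alpha> E 0) / x = 0" by (rule q)
    qed (rule d)
    have l: "eventually (\<lambda>\<epsilon>. (Lyap v \<alpha> E \<epsilon> - Lyap v \<alpha> E 0) / \<epsilon> = 0) (at_left 0)"
    proof (rule eventually_at_leftI[of "-\<delta>" 0])
      fix x :: real assume "x \<in> {-\<delta><..<0}"
      hence "\<bar>x\<bar> < \<delta>" by (simp add: abs_less_iff)
      thus "(Lyap v \<alpha> E x - Lyap v \<alpha> E 0) / x = 0" by (rule q)
    qed (use d in simp)
    show ?thesis using tendsto_eventually[OF r] tendsto_eventually[OF l] by simp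
  qed
  have part2: "E \<in> \<real>" if y: "\<bar>y\<bar> < h" and z: "Lyap v \<alpha> E y = 0" for y E
  proof (rule ccontr)
    assume E: "E \<notin> \<real>"
    obtain \<delta> where d: "\<delta> > 0" and c: "\<And>y. \<bar>y\<bar> < \<delta> \<Longrightarrow> Lyap v \<alpha> E y = Lyap v \<alpha> E 0"
      and p: "0 < Lyap v \<alpha> E 0"
      using L.nonreal_hyp[OF E] by blast
    show False
    proof (cases "\<bar>y\<bar> < \<delta>")
      case True
      have "Lyap v \<alpha> E y = Lyap v \<alpha> E 0" by (rule c[OF True])
      thus False using p z by simp
    next
      case False
      define t where "t = \<delta> / 2 / \<bar>y\<bar>"
      have yp: "0 < \<bar>y\<bar>" using False d by simp
      have t: "0 < t" "t \<le> 1" using d False yp by (auto simp: t_def field_simps)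
      have ty: "\<bar>(1 - t) * 0 + t * y\<bar> < \<delta>" using d yp by (simp add: t_def abs_mult)
      have h0: "\<bar>0::real\<bar> < h" using hpos by simp
      have "Lyap v \<alpha> E ((1 - t) * 0 + t * y) \<le> (1 - t) * Lyap v \<alpha> E 0 + t * Lyap v \<alpha> E y"
        by (rule L.Lyap_convex[OF h0 y]) (use t in auto)
      moreover have "Lyap v \<alpha> E ((1 - t) * 0 + t * y) = Lyap v \<alpha> E 0" by (rule c[OF ty])
      ultimately have "Lyap v \<alpha> E 0 \<le> (1 - t) * Lyap v \<alpha> E 0" using z by simp
      hence "t * Lyap v \<alpha> E 0 \<le> 0" by (simp add: algebra_simps)
      thus False using t p by (simp add: mult_le_0_iff)
    qed
  qed
  show ?thesis using part1 part2 by blast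
qed

end
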